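(* Let $V$ be a set with $n$ elements and let $\Gamma = \mathrm{sd}(2^V)$ be its barycentric subdivision. Let $E = \{S_1, \dots, S_k\}$ be a face of $\Gamma$, with $k \ge 0$ and $\emptyset \ne S_1 \subsetneq S_2 \subsetneq \cdots \subsetneq S_k \subseteq V$. Then $$ \ell_V(\Gamma, E, x) = d_{r_0}(x)\, A_{r_1}(x) \cdots A_{r_k}(x), $$ where $r_0 = |V \setminus S_k|$ and $r_i = |S_i \setminus S_{i-1}|$ for $1 \le i \le k$, with the conventions $S_0 = \emptyset$ and $d_0 = 1$.
   Context: For a simplicial complex $\Delta$ of dimension $d-1$, $h(\Delta, x) = \sum_{F \in \Delta} x^{|F|} (1-x)^{d-|F|}$. The $h$-polynomial of a complex is always computed with respect to that complex's own dimension; in particular $h(\{\emptyset\}, x) = 1$. Barycentric subdivision: $\mathrm{sd}(2^V)$ is the simplicial complex of chains of nonempty subsets of $V$, with carrier map $\sigma$ sending a nonempty chain to its largest element and the empty chain to $\emptyset$. For $F \subseteq V$, the restriction is $\Gamma_F = \sigma^{-1}(2^F)$, and the link is $\mathrm{lk}_{\Gamma_F}(E) = \{G \setminus E : E \subseteq G \in \Gamma_F\}$. Relative local $h$-polynomial: for a subdivision $\Gamma$ of $2^V$ with $|V| = d$ and $E \in \Gamma$, $$ \ell_V(\Gamma, E, x) = \sum_{\sigma(E) \subseteq F \subseteq V} (-1)^{d-|F|}\, h(\mathrm{lk}_{\Gamma_F}(E), x). $$ Type A: $A_m(x) = \sum_{u \in \mathfrak{S}_m} x^{\mathrm{des}(u)}$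 and $d_m(x) = \sum x^{\mathrm{exc}(u)}$ over fixed-point-free $u \in \mathfrak{S}_m$. *)

theory Defs
  imports "HOL-Computational_Algebra.Polynomial" "HOL-Combinatorics.Permutations"
begin

text \<open>Simplicial complexes are represented as sets of faces (finite sets of vertices).
  A complex of dimension d-1 has maximal face cardinality d.\<close>

definition cplx_rank :: "'v set set \<Rightarrow> nat" where
  "cplx_rank \<Delta> = Max (card ` \<Delta>)"

definition hpoly :: "'v set set \<Rightarrow> int poly" where
  "hpoly \<Delta> = (\<Sum>F\<in>\<Delta>. monom 1 (card F) * [:1, -1:] ^ (cplx_rank \<Delta> - card F))"

definition link :: "'v set set \<Rightarrow> 'v set \<Rightarrow> 'v set set" where
  "link \<Delta> E = {G - E | G. G \<in> \<Delta> \<and> E \<subseteq> G}"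

definition is_chain :: "'a set set \<Rightarrow> bool" where
  "is_chain C \<longleftrightarrow> (\<forall>A\<in>C. \<forall>B\<in>C. A \<subseteq> B \<or> B \<subseteq> A)"

text \<open>Barycentric subdivision of the simplex 2^V: chains of nonempty subsets of V.\<close>
definition sd :: "'a set \<Rightarrow> 'a set set set" where
  "sd V = {C. C \<subseteq> Pow V - {{}} \<and> is_chain C}"

definition bary_carrier :: "'a set set \<Rightarrow> 'a set" where
  "bary_carrier C = (if C = {} then {} else (THE M. M \<in> C \<and> (\<forall>A\<in>C. A \<subseteq> M)))"

definition restr :: "('v set \<Rightarrow> 'a set) \<Rightarrow> 'v set set \<Rightarrow> 'a set \<Rightarrow> 'v set set" where
  "restr \<sigma> \<Gamma> F = {G \<in> \<Gamma>. \<sigma> G \<subseteq> F}"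

definition rel_local_h :: "('v set \<Rightarrow> 'a set) \<Rightarrow> 'a set \<Rightarrow> 'v set set \<Rightarrow> 'v set \<Rightarrow> int poly" where
  "rel_local_h \<sigma> V \<Gamma> E =
     (\<Sum>F\<in>{F. \<sigma> E \<subseteq> F \<and> F \<subseteq> V}. (-1) ^ (card V - card F) * hpoly (link (restr \<sigma> \<Gamma> F) E))"

definition des :: "nat \<Rightarrow> (nat \<Rightarrow> nat) \<Rightarrow> nat" where
  "des m u = card {i \<in> {1..<m}. u i > u (Suc i)}"

definition exc :: "nat \<Rightarrow> (nat \<Rightarrow> nat) \<Rightarrow> nat" where
  "exc m u = card {i \<in> {1..m}. u i > i}"

definition eulerian_poly :: "nat \<Rightarrow> int poly" where
  "eulerian_poly m = (\<Sum>u\<in>{u. u permutes {1..m}}. monom 1 (des m u))"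

definition derange_poly :: "nat \<Rightarrow> int poly" where
  "derange_poly m = (\<Sum>u\<in>{u. u permutes {1..m} \<and> (\<forall>i\<in>{1..m}. u i \<noteq> i)}. monom 1 (exc m u))"

end

theory Submission
  imports Defs
begin


abbreviation X :: "int poly" where "X \<equiv> monom 1 1"

lemma Y_eq: "[:1,-1:] = (1 - X :: int poly)"
  by (simp add: monom_altdef one_pCons)

definition Top :: "nat \<Rightarrow> int poly \<Rightarrow> int poly" where
  "Top N p = p + X * (1 - X) * pderiv p + of_nat N * X * p"

lemma Top_add: "Top N (p + q) = Top N p + Top N q"
  by (simp add: Top_def pderiv_add algebra_simps)

lemma Top_0: "Top N 0 = 0" by (simp add: Top_def)

lemma pderiv_of_nat[simp]: "pderiv (of_nat n :: int poly) = 0"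
  by (simp add: of_nat_poly)

lemma pderiv_of_int[simp]: "pderiv (of_int n :: int poly) = 0"
  by (simp add: of_int_poly)

lemma Top_cmult: "Top N (of_int c * p) = of_int c * Top N p"
  by (simp add: Top_def pderiv_mult algebra_simps)

lemma Top_sum: "Top N (sum f A) = (\<Sum>a\<in>A. Top N (f a))"
  by (induction A rule: infinite_finite_induct) (auto simp: Top_0 Top_add)

lemma X_pow: "X ^ k = monom 1 k"
  by (simp add: monom_altdef)

lemma smult_nat: "smult (of_nat n) p = of_nat n * (p::int poly)"
  by (simp add: of_nat_poly)

lemma smult_int: "smult c p = of_int c * (p::int poly)"
  by (simp add: of_int_poly)

lemma pderiv_X: "pderiv X = 1"
  by (simp add: pderiv_monom)

lemma pderiv_X'[simp]: "pderiv (monom 1 (Suc 0) :: int poly) = 1"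
  by (simp add: pderiv_monom)

lemma pderiv_Xpow: "pderiv (X ^ Suc k) = of_nat (Suc k) * X ^ k"
  unfolding pderiv_power_Suc pderiv_X smult_nat by simp

lemma Top_monom:
  assumes "e \<le> N"
  shows "Top N (X ^ e) = of_nat (e+1) * X ^ e + of_nat (N-e) * X ^ (e+1)"
proof (cases e)
  case 0
  then show ?thesis by (simp add: Top_def algebra_simps)
next
  case (Suc k)
  have "Top N (X^e) = X^e + X * (1 - X) * (of_nat e * X ^ k) + of_nat N * X * X^e"
    unfolding Suc Top_def pderiv_Xpow by simp
  also have "\<dots> = of_nat (e+1) * X ^ e + (of_nat N - of_nat e) * X ^ (e+1)"
    using Suc by (simp add: algebra_simps)
  finally show ?thesis using assms by (simp add: of_nat_diff)
qed

lemma Top_chain: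
  assumes "k \<le> N"
  shows "Top N (X ^ k * (1 - X) ^ (N-k)) = of_nat (k+1) * (X ^ k * (1 - X) ^ (N-k))"
proof -
  define j where "j = N - k"
  have N: "N = k + j" using assms j_def by simp
  have d1: "X * pderiv (X ^ k) = of_nat k * X ^ k"
    proof (cases k)
    case (Suc k')
    show ?thesis unfolding Suc pderiv_Xpow by (simp add: algebra_simps)
  qed simp
  have d2: "(1 - X) * pderiv ((1 - X) ^ j) = - (of_nat j * (1-X) ^ j)"
  proof (cases j)
    case (Suc j')
    show ?thesis unfolding Suc pderiv_power_Suc by (simp add: pderiv_diff smult_int algebra_simps)
  qed simp
  have "Top N (X ^ k * (1 - X) ^ j) = X ^ k * (1 - X) ^ j
      + (1-X) * (1-X)^j * (X * pderiv (X ^ k)) + X * X^k * ((1 - X) * pderiv ((1 - X) ^ j))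
      + of_nat N * X * (X ^ k * (1 - X) ^ j)"
    by (simp add: Top_def pderiv_mult algebra_simps)
  also have "\<dots> = of_nat (k+1) * (X ^ k * (1 - X) ^ j)"
    unfolding d1 d2 N by (simp add: algebra_simps)
  finally show ?thesis using j_def by simp
qed

fun Ppol :: "nat \<Rightarrow> int poly" where
  "Ppol 0 = 1" | "Ppol (Suc m) = Top m (Ppol m)"




definition excs :: "nat set \<Rightarrow> (nat \<Rightarrow> nat) \<Rightarrow> nat" where
  "excs B u = card {i\<in>B. u i > i}"

definition EXC :: "nat set \<Rightarrow> int poly" where
  "EXC B = (\<Sum>u\<in>{u. u permutes B}. X ^ excs B u)"

lemma exc_step_set:
  fixes q :: "nat \<Rightarrow> nat"
  assumes mB: "m \<notin> B" and lt: "\<forall>j\<in>B. j < m" and q: "q permutes B" and iB: "i \<in> B"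
  shows "{j \<in> insert m B. (transpose m (q i) \<circ> q) j > j} = insert i {j\<in>B. q j > j}"
proof -
  have qi: "q i \<in> B" using permutes_in_image[OF q] iB by simp
  have qm: "q m = m" using permutes_not_in[OF q] mB by simp
  have val: "(transpose m (q i) \<circ> q) j = (if j = m then q i else if j = i then m else q j)"
    if "j \<in> insert m B" for j
  proof (cases "j = m")
    case True then show ?thesis using qm by simp
  next
    case False
    then have jB: "j \<in> B" using that by simp
    then have "q j \<in> B" using permutes_in_image[OF q] by simp
    then have "q j \<noteq> m" using mB by metis
    moreover have "j \<noteq> i \<Longrightarrow> q j \<noteq> q i" using permutes_inj[OF q] by (metis injD)
    ultimately show ?thesis using False by (simp add: transpose_def)
  qed
  have im: "i < m" using lt iB by blast
  have qim: "q i < m" using qi lt by blast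
  show ?thesis
  proof (rule set_eqI)
    fix j
    show "j \<in> {j \<in> insert m B. (transpose m (q i) \<circ> q) j > j} \<longleftrightarrow> j \<in> insert i {j\<in>B. q j > j}"
    proof (cases "j \<in> insert m B")
      case True
      show ?thesis
      proof (cases "j = m")
        case jm: True
        have "\<not> (q i > m)" using qim by linarith
        moreover have "j \<noteq> i" using jm im by simp
        moreover have "j \<notin> B" using jm mB by simp
        ultimately show ?thesis using val[OF True] jm by simp
      next
        case jm: False
        show ?thesis
        proof (cases "j = i")
          case True then show ?thesis using val[of j] jm im iB by simp
        next
          case False then show ?thesis using val[of j] jm \<open>j \<in> insert m B\<close> by simp
        qed
      qed
    next
      case False
      then show ?thesis using iB by auto
    qed
  qed
qed

lemma exc_step_sum:
  assumes fin: "finite B" and "m \<notin> B" "\<forall>j\<in>B. j < m" and q: "q permutes B"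
  shows "(\<Sum>b\<in>insert m B. X ^ excs (insert m B) (transpose m b \<circ> q))
         = Top (card B) (X ^ excs B q)"
proof -
  let ?E = "{j\<in>B. q j > j}"
  have finE: "finite ?E" using fin by auto
  have eN: "excs B q \<le> card B" unfolding excs_def using fin by (intro card_mono) auto
  have qm: "q m = m" using permutes_not_in[OF q] assms(2) by simp
  have m_term: "excs (insert m B) (transpose m m \<circ> q) = excs B q"
    unfolding excs_def using qm by (auto intro: arg_cong[where f=card])
  have "(\<Sum>b\<in>B. X ^ excs (insert m B) (transpose m b \<circ> q))
        = (\<Sum>i\<in>B. X ^ excs (insert m B) (transpose m (q i) \<circ> q))"
  proof -
    have "inj_on q B" using q permutes_inj_on by blast
    moreover have "q ` B = B" using q permutes_image by blast
    ultimately show ?thesis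
      using sum.reindex[of q B "\<lambda>b. X ^ excs (insert m B) (transpose m b \<circ> q)"] by simp
  qed
  also have "\<dots> = (\<Sum>i\<in>B. X ^ card (insert i ?E))"
    unfolding excs_def using exc_step_set[OF assms(2,3) q] by simp
  also have "\<dots> = (\<Sum>i\<in>B. if i \<in> ?E then X ^ excs B q else X ^ (excs B q + 1))"
    by (intro sum.cong refl) (auto simp: excs_def card_insert_if finE)
  also have "\<dots> = of_nat (excs B q) * X ^ excs B q + of_nat (card B - excs B q) * X ^ (excs B q + 1)"
  proof -
    have "?E \<subseteq> B" by auto
    have "card (B - ?E) = card B - excs B q" unfolding excs_def
      using fin by (intro card_Diff_subset) auto
    moreover have "{i\<in>B. i \<in> ?E} = ?E" "{i\<in>B. i \<notin> ?E} = B - ?E" "B \<inter> ?E = ?E" "B \<inter> - ?E = B - ?E" by auto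
    ultimately show ?thesis
      using sum.If_cases[OF fin, of "\<lambda>i. i \<in> ?E" "\<lambda>_. X ^ excs B q" "\<lambda>_. X ^ (excs B q + 1)"]
      by (simp add: excs_def)
  qed
  finally have "(\<Sum>b\<in>B. X ^ excs (insert m B) (transpose m b \<circ> q)) = \<dots>" .
  then show ?thesis
    using Top_monom[OF eN] m_term assms(2) fin by (simp add: algebra_simps)
qed

lemma EXC_Ppol: "finite B \<Longrightarrow> EXC B = Ppol (card B)"
proof (induction "card B" arbitrary: B)
  case 0
  then show ?case by (simp add: EXC_def excs_def)
next
  case (Suc n)
  define m where "m = Max B"
  define B' where "B' = B - {m}"
  have ne: "B \<noteq> {}" using Suc by auto
  have mB: "m \<in> B" using Suc ne m_def by simp
  have B: "B = insert m B'" using mB B'_def by auto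
  have mB': "m \<notin> B'" using B'_def by simp
  have lt: "\<forall>j\<in>B'. j < m" using Suc B'_def m_def by (metis DiffE Max_ge insertI1 le_neq_implies_less)
  have fin: "finite B'" using Suc B'_def by simp
  have cB': "card B' = n" using Suc B mB' fin by simp
  have "EXC B = (\<Sum>b\<in>insert m B'. \<Sum>q\<in>{p. p permutes B'}. X ^ excs B (transpose m b \<circ> q))"
    unfolding EXC_def B using sum_over_permutations_insert[OF fin mB'] by simp
  also have "\<dots> = (\<Sum>q\<in>{p. p permutes B'}. \<Sum>b\<in>insert m B'. X ^ excs B (transpose m b \<circ> q))"
    by (rule sum.swap)
  also have "\<dots> = (\<Sum>q\<in>{p. p permutes B'}. Top (card B') (X ^ excs B' q))"
    unfolding B using exc_step_sum[OF fin mB' lt] by simp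
  also have "\<dots> = Top n (EXC B')" unfolding EXC_def Top_sum cB' ..
  also have "\<dots> = Ppol (Suc n)" using Suc.hyps(1)[of B'] cB' fin by simp
  finally show ?case using Suc by simp
qed




definition DER :: "nat set \<Rightarrow> int poly" where
  "DER B = (\<Sum>u\<in>{u. u permutes B \<and> (\<forall>i\<in>B. u i \<noteq> i)}. X ^ excs B u)"

lemma EXC_DER:
  assumes fin: "finite A"
  shows "EXC A = sum DER (Pow A)"
proof -
  let ?g = "\<lambda>u. {i\<in>A. u i \<noteq> i}"
  have finP: "finite {u. u permutes A}" using fin finite_permutations by blast
  have "EXC A = (\<Sum>B\<in>Pow A. \<Sum>u\<in>{u\<in>{u. u permutes A}. ?g u = B}. X ^ excs A u)"
    unfolding EXC_def using fin finP by (intro sum.group[symmetric]) auto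
  also have "\<dots> = sum DER (Pow A)"
  proof (intro sum.cong refl)
    fix B assume "B \<in> Pow A"
    then have BA: "B \<subseteq> A" by simp
    have eq: "{u\<in>{u. u permutes A}. ?g u = B} = {u. u permutes B \<and> (\<forall>i\<in>B. u i \<noteq> i)}"
    proof (intro set_eqI iffI)
      fix u assume u: "u \<in> {u\<in>{u. u permutes A}. ?g u = B}"
      then have pA: "u permutes A" and gB: "?g u = B" by auto
      have "u permutes B"
        by (rule permutes_superset[OF pA]) (use gB in auto)
      moreover have "\<forall>i\<in>B. u i \<noteq> i" using gB by auto
      ultimately show "u \<in> {u. u permutes B \<and> (\<forall>i\<in>B. u i \<noteq> i)}" by simp
    next
      fix u assume u: "u \<in> {u. u permutes B \<and> (\<forall>i\<in>B. u i \<noteq> i)}"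
      then have pB: "u permutes B" and nf: "\<forall>i\<in>B. u i \<noteq> i" by auto
      have "u permutes A" using permutes_subset[OF pB BA] .
      moreover have "?g u = B"
        using nf BA permutes_not_in[OF pB] by auto
      ultimately show "u \<in> {u\<in>{u. u permutes A}. ?g u = B}" by simp
    qed
    have ex: "excs A u = excs B u" if "u permutes B" for u
      unfolding excs_def using permutes_not_in[OF that] BA
      by (intro arg_cong[where f=card]) (metis (mono_tags, lifting) less_irrefl subsetD)
    show "(\<Sum>u\<in>{u\<in>{u. u permutes A}. ?g u = B}. X ^ excs A u) = DER B"
      unfolding eq DER_def by (intro sum.cong refl) (simp add: ex)
  qed
  finally show ?thesis .
qed

definition ALT :: "'b set \<Rightarrow> int poly" where
  "ALT Y = (\<Sum>W\<in>Pow Y. (-1) ^ (card Y - card W) * Ppol (card W))"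

definition Qf :: "nat \<Rightarrow> int poly" where
  "Qf n = (\<Sum>j\<le>n. (-1) ^ (n - j) * of_nat (n choose j) * Ppol j)"

lemma ALT_card:
  assumes fin: "finite Y"
  shows "ALT Y = Qf (card Y)"
proof -
  have "ALT Y = (\<Sum>j\<in>{..card Y}. \<Sum>W\<in>{W\<in>Pow Y. card W = j}. (-1) ^ (card Y - card W) * Ppol (card W))"
    unfolding ALT_def using fin
    by (intro sum.group[symmetric]) (auto intro: card_mono)
  also have "\<dots> = (\<Sum>j\<le>card Y. of_nat (card Y choose j) * ((-1) ^ (card Y - j) * Ppol j))"
  proof (intro sum.cong refl)
    fix j
    have "{W\<in>Pow Y. card W = j} = {B. B \<subseteq> Y \<and> card B = j}" by auto
    then have c: "card {W\<in>Pow Y. card W = j} = card Y choose j" using n_subsets[OF fin] by simp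
    have "(\<Sum>W\<in>{W\<in>Pow Y. card W = j}. (-1) ^ (card Y - card W) * Ppol (card W))
        = (\<Sum>W\<in>{W\<in>Pow Y. card W = j}. (-1) ^ (card Y - j) * Ppol j)" by (intro sum.cong refl) auto
    also have "\<dots> = of_nat (card Y choose j) * ((-1) ^ (card Y - j) * Ppol j)" using c by simp
    finally show "(\<Sum>W\<in>{W\<in>Pow Y. card W = j}. (-1) ^ (card Y - card W) * Ppol (card W)) = \<dots>" .
  qed
  finally show ?thesis unfolding Qf_def by (simp add: algebra_simps)
qed

lemma derange_Qf: "derange_poly n = Qf n"
proof -
  have fin: "finite {1..n}" by simp
  have "DER {1..n} = (\<Sum>T\<in>Pow {1..n}. (-1) ^ (card {1..n} - card T) * EXC T)"
    by (rule inclusion_exclusion_mobius) (auto intro: EXC_DER)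
  also have "\<dots> = ALT {1..n}" unfolding ALT_def
  proof (intro sum.cong refl)
    fix T assume "T \<in> Pow {1..n}"
    then have "finite T" using finite_subset[OF _ fin] by auto
    then show "(-1) ^ (card {1..n} - card T) * EXC T = (-1) ^ (card {1..n} - card T) * Ppol (card T)"
      by (simp add: EXC_Ppol)
  qed
  also have "\<dots> = Qf n" using ALT_card[OF fin] by simp
  finally have "DER {1..n} = Qf n" .
  moreover have "derange_poly n = DER {1..n}"
    unfolding derange_poly_def DER_def excs_def exc_def X_pow by simp
  ultimately show ?thesis by simp
qed




fun desl :: "nat list \<Rightarrow> nat" where
  "desl (a # b # xs) = (if a > b then 1 else 0) + desl (b # xs)"
| "desl _ = 0"

definition ins :: "nat \<Rightarrow> nat \<Rightarrow> nat list \<Rightarrow> nat list" where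
  "ins p m ws = take p ws @ m # drop p ws"

lemma ins_0[simp]: "ins 0 m ws = m # ws" by (simp add: ins_def)
lemma ins_Suc[simp]: "ins (Suc q) m (b # ws) = b # ins q m ws" by (simp add: ins_def)

lemma desl_cons_ins:
  assumes "ws \<noteq> []" "a < m"
  shows "desl (a # ins q m ws) = (if q \<noteq> 0 \<and> a > hd ws then 1 else 0) + desl (ins q m ws)"
proof (cases q)
  case 0 then show ?thesis using assms by simp
next
  case (Suc q')
  obtain b ws' where "ws = b # ws'" using assms by (cases ws) auto
  then show ?thesis using Suc by simp
qed

lemma ins_sum:
  assumes "\<forall>x\<in>set ws. x < m"
  shows "(\<Sum>p\<le>length ws. X ^ desl (ins p m ws)) =
    (of_nat (desl ws) + 1) * X ^ desl ws + (of_nat (length ws) - of_nat (desl ws)) * X ^ (desl ws + 1)"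
  using assms
proof (induction ws)
  case Nil
  then show ?case by simp
next
  case (Cons a ws')
  show ?case
  proof (cases ws')
    case Nil
    then show ?thesis using Cons.prems by (simp add: algebra_simps)
  next
    case (Cons b ws'')
    have am: "a < m" using Cons.prems by simp
    have ne: "ws' \<noteq> []" using Cons by simp
    define d' where "d' = desl ws'"
    define c where "c = (if a > b then 1 else 0 :: nat)"
    have dmw: "desl (m # ws') = d' + 1" using Cons Cons.prems by (simp add: d'_def)
    have daw: "desl (a # ws') = c + d'" using Cons by (simp add: d'_def c_def)
    define R where "R = (\<Sum>q\<le>length ws''. X ^ desl (ins (Suc q) m ws'))"
    have IH: "X ^ (d' + 1) + R = (of_nat d' + 1) * X ^ d' + (of_nat (length ws') - of_nat d') * X ^ (d' + 1)"
    proof -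
      have lw: "length ws' = Suc (length ws'')" using Cons by simp
      have "(\<Sum>p\<le>length ws'. X ^ desl (ins p m ws')) = X ^ (d' + 1) + R"
        unfolding R_def lw sum.atMost_Suc_shift using dmw by simp
      then show ?thesis using Cons.IH Cons.prems by (simp add: d'_def)
    qed
    have "(\<Sum>p\<le>length (a # ws'). X ^ desl (ins p m (a # ws')))
        = X ^ desl (m # a # ws') + (\<Sum>q\<le>length ws'. X ^ desl (a # ins q m ws'))"
      unfolding length_Cons sum.atMost_Suc_shift by simp
    also have "(\<Sum>q\<le>length ws'. X ^ desl (a # ins q m ws'))
        = X ^ desl (m # ws') + (\<Sum>q\<le>length ws''. X ^ (c + desl (ins (Suc q) m ws')))"
      unfolding Cons length_Cons sum.atMost_Suc_shift using am by (simp add: c_def)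
    also have "(\<Sum>q\<le>length ws''. X ^ (c + desl (ins (Suc q) m ws'))) = X ^ c * R"
      unfolding R_def by (simp add: sum_distrib_left power_add)
    finally have S: "(\<Sum>p\<le>length (a # ws'). X ^ desl (ins p m (a # ws')))
        = X ^ (c + d' + 1) + X ^ (d' + 1) + X ^ c * R"
      using am daw dmw by simp
    have "c = 0 \<or> c = 1" by (simp add: c_def)
    then show ?thesis
    proof
      assume c0: "c = 0"
      then show ?thesis using S IH daw by (simp add: algebra_simps)
    next
      assume c1: "c = 1"
      have R: "R = (of_nat d' + 1) * X ^ d' + (of_nat (length ws') - of_nat d') * X ^ (d' + 1) - X ^ (d' + 1)"
        using IH by (simp add: algebra_simps)
      show ?thesis using S daw c1 unfolding R by (simp add: algebra_simps)
    qed
  qed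
qed

lemma desl_le: "desl ws \<le> length ws"
  by (induction ws rule: desl.induct) auto

definition Dl :: "nat set \<Rightarrow> int poly" where
  "Dl A = (\<Sum>xs\<in>{xs. distinct xs \<and> set xs = A}. X ^ desl xs)"

lemma removeAll_ins: "m \<notin> set ws \<Longrightarrow> removeAll m (ins p m ws) = ws"
proof -
  assume m: "m \<notin> set ws"
  have "m \<notin> set (take p ws)" "m \<notin> set (drop p ws)" using m in_set_takeD in_set_dropD by metis+
  then have "removeAll m (ins p m ws) = take p ws @ drop p ws" unfolding ins_def by simp
  then show ?thesis by simp
qed

lemma mset_ins: "mset (ins p m ws) = mset (m # ws)"
proof -
  have "mset (ins p m ws) = add_mset m (mset (take p ws) + mset (drop p ws))" by (simp add: ins_def)
  also have "mset (take p ws) + mset (drop p ws) = mset ws"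
    by (metis append_take_drop_id mset_append)
  finally show ?thesis by simp
qed

lemma takeWhile_ins: "m \<notin> set ws \<Longrightarrow> p \<le> length ws \<Longrightarrow> length (takeWhile (\<lambda>x. x \<noteq> m) (ins p m ws)) = p"
  unfolding ins_def
  by (subst takeWhile_append2) (auto dest: in_set_takeD)

lemma Dl_Ppol: "finite A \<Longrightarrow> Dl A = Ppol (card A)"
proof (induction "card A" arbitrary: A)
  case 0
  then have "A = {}" by simp
  moreover have e: "{xs. distinct xs \<and> set xs = {}} = {[]}" by auto
  ultimately show ?case unfolding Dl_def by (simp only: e) simp
next
  case (Suc n)
  define m where "m = Max A"
  define A' where "A' = A - {m}"
  have ne: "A \<noteq> {}" using Suc by auto
  have mA: "m \<in> A" using Suc ne m_def by simp
  have A: "A = insert m A'" using mA A'_def by auto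
  have mA': "m \<notin> A'" using A'_def by simp
  have lt: "\<forall>j\<in>A'. j < m" using Suc A'_def m_def by (metis DiffE Max_ge insertI1 le_neq_implies_less)
  have fin: "finite A'" using Suc A'_def by simp
  have cA': "card A' = n" using Suc A mA' fin by simp
  let ?L = "{xs. distinct xs \<and> set xs = A'}"
  let ?S = "Sigma ?L (\<lambda>ws. {..length ws})"
  let ?f = "\<lambda>(ws, p). ins p m ws"
  have len: "length ws = n" if "ws \<in> ?L" for ws
    using that cA' distinct_card by fastforce
  have inj: "inj_on ?f ?S"
  proof (rule inj_onI)
    fix x y assume x: "x \<in> ?S" and y: "y \<in> ?S" and eq0: "?f x = ?f y"
    obtain ws p where xe: "x = (ws, p)" by fastforce
    obtain ws' p' where ye: "y = (ws', p')" by fastforce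
    have eq: "ins p m ws = ins p' m ws'" using eq0 xe ye by simp
    have h: "m \<notin> set ws" "m \<notin> set ws'" "p \<le> length ws" "p' \<le> length ws'"
      using mA' x y xe ye by auto
    have "ws = ws' \<and> p = p'"
      using removeAll_ins[OF h(1), of p] removeAll_ins[OF h(2), of p'] eq
        takeWhile_ins[OF h(1) h(3)] takeWhile_ins[OF h(2) h(4)] by metis
    then show "x = y" using xe ye by simp
  qed
  have img: "?f ` ?S = {xs. distinct xs \<and> set xs = A}"
  proof (intro set_eqI iffI)
    fix xs assume "xs \<in> ?f ` ?S"
    then obtain ws p where ws: "ws \<in> ?L" "p \<le> length ws" and xs: "xs = ins p m ws" by auto
    have "distinct (m # ws)" using ws mA' by simp
    then have "distinct xs" unfolding xs using mset_eq_imp_distinct_iff[OF mset_ins] by blast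
    moreover have "set xs = A" unfolding xs using mset_eq_setD[OF mset_ins] ws A by simp
    ultimately show "xs \<in> {xs. distinct xs \<and> set xs = A}" by simp
  next
    fix xs assume xs: "xs \<in> {xs. distinct xs \<and> set xs = A}"
    then have "m \<in> set xs" using mA by simp
    then obtain ys zs where d: "xs = ys @ m # zs" by (meson split_list)
    have h1: "ys @ zs \<in> ?L" using xs d A'_def by auto
    have h2: "xs = ins (length ys) m (ys @ zs)" using d by (simp add: ins_def)
    show "xs \<in> ?f ` ?S" by (rule image_eqI[where x="(ys @ zs, length ys)"]) (use h1 h2 in auto)
  qed
  have "Dl A = (\<Sum>(ws, p)\<in>?S. X ^ desl (ins p m ws))"
    unfolding Dl_def using sum.reindex[OF inj, of "\<lambda>xs. X ^ desl xs"] img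
    by (simp add: case_prod_beta')
  also have "\<dots> = (\<Sum>ws\<in>?L. \<Sum>p\<le>length ws. X ^ desl (ins p m ws))"
  proof (rule sum.Sigma[symmetric])
    have "?L \<subseteq> {xs. set xs \<subseteq> A' \<and> length xs = n}" using len by auto
    then show "finite ?L" using finite_subset[OF _ finite_lists_length_eq[OF fin]] by blast
  qed auto
  also have "\<dots> = (\<Sum>ws\<in>?L. Top n (X ^ desl ws))"
  proof (intro sum.cong refl)
    fix ws assume ws: "ws \<in> ?L"
    have "\<forall>x\<in>set ws. x < m" using ws lt by auto
    then show "(\<Sum>p\<le>length ws. X ^ desl (ins p m ws)) = Top n (X ^ desl ws)"
      using ins_sum[OF \<open>\<forall>x\<in>set ws. x < m\<close>] Top_monom[of "desl ws" n] desl_le[of ws] len[OF ws]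
      by (simp add: of_nat_diff)
  qed
  also have "\<dots> = Top n (Dl A')" unfolding Dl_def Top_sum ..
  also have "\<dots> = Ppol (Suc n)" using Suc.hyps(1)[of A'] cA' fin by simp
  finally show ?case using Suc by simp
qed




declare upt_Suc[simp del]

lemma desl_sum: "desl xs = (\<Sum>i<length xs - 1. if xs ! (Suc i) < xs ! i then 1 else 0)"
proof (induction xs rule: desl.induct)
  case (1 a b xs)
  have "length (a # b # xs) - 1 = Suc (length (b # xs) - 1)" by simp
  then show ?case using 1 by (simp only: sum.lessThan_Suc_shift) simp
qed auto

lemma des_desl: "des m u = desl (map u [1..<Suc m])"
proof -
  let ?xs = "map u [1..<Suc m]"
  have "desl ?xs = (\<Sum>i<m - 1. if u (Suc (Suc i)) < u (Suc i) then 1 else 0)"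
    unfolding desl_sum by (intro sum.cong refl) (auto simp: nth_map_upt)
  also have "\<dots> = (\<Sum>i\<in>{1..<m}. if u (Suc i) < u i then 1 else 0)"
  proof -
    have "{1..<m} = Suc ` {..<m-1}"
    proof (rule set_eqI, rule iffI)
      fix x assume "x \<in> {1..<m}" then show "x \<in> Suc ` {..<m-1}"
        by (intro image_eqI[where x="x - 1"]) auto
    qed auto
    then show ?thesis by (simp add: sum.reindex)
  qed
  also have "\<dots> = des m u" unfolding des_def by (simp add: sum.If_cases) (intro arg_cong[where f=card], auto)
  finally show ?thesis by simp
qed

lemma eulerian_Dl: "eulerian_poly m = Dl {1..m}"
proof -
  let ?f = "\<lambda>u. map u [1..<Suc m]"
  let ?P = "{u. u permutes {1..m}}"
  have inj: "inj_on ?f ?P"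
  proof (rule inj_onI)
    fix u v assume u: "u \<in> ?P" and v: "v \<in> ?P" and eq: "?f u = ?f v"
    show "u = v"
    proof
      fix i
      show "u i = v i"
      proof (cases "i \<in> {1..m}")
        case True
        then have "i \<in> set [1..<Suc m]" by simp
        then show ?thesis using eq by (metis map_eq_conv)
      next
        case False then show ?thesis using u v permutes_not_in by (metis mem_Collect_eq)
      qed
    qed
  qed
  have img: "?f ` ?P = {xs. distinct xs \<and> set xs = {1..m}}"
  proof (intro set_eqI iffI)
    fix xs assume "xs \<in> ?f ` ?P"
    then obtain u where u: "u permutes {1..m}" and xs: "xs = ?f u" by auto
    have "inj_on u {1..m}" using permutes_inj_on[OF u] .
    then have "distinct xs" unfolding xs by (simp add: distinct_map inj_on_subset atLeastLessThanSuc_atLeastAtMost)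
    moreover have "set xs = {1..m}" unfolding xs using permutes_image[OF u]
      by (simp add: atLeastLessThanSuc_atLeastAtMost)
    ultimately show "xs \<in> {xs. distinct xs \<and> set xs = {1..m}}" by simp
  next
    fix xs assume "xs \<in> {xs. distinct xs \<and> set xs = {1..m}}"
    then have d: "distinct xs" and s: "set xs = {1..m}" by auto
    have len: "length xs = m" using distinct_card[OF d] s by simp
    define u where "u i = (if i \<in> {1..m} then xs ! (i - 1) else i)" for i
    have "bij_betw u {1..m} {1..m}"
    proof (rule bij_betw_imageI)
      show "inj_on u {1..m}"
        using d len unfolding u_def by (auto simp: inj_on_def nth_eq_iff_index_eq)
      have "u ` {1..m} = (\<lambda>i. xs ! (i - 1)) ` {1..m}" unfolding u_def by (rule image_cong) auto
      also have "\<dots> = (\<lambda>i. xs ! i) ` ((\<lambda>i. i - 1) ` {1..m})" by (simp add: image_image)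
      also have "(\<lambda>i. i - 1) ` {1..m} = {..<m}"
      proof (rule set_eqI, rule iffI)
        fix x assume "x \<in> (\<lambda>i. i - 1) ` {1..m}" then show "x \<in> {..<m}" by auto
      next
        fix x assume "x \<in> {..<m}" then show "x \<in> (\<lambda>i. i - 1) ` {1..m}"
          by (intro image_eqI[where x="Suc x"]) auto
      qed
      also have "(\<lambda>i. xs ! i) ` {..<m} = set xs" unfolding len[symmetric] set_conv_nth by auto
      finally show "u ` {1..m} = {1..m}" using s by simp
    qed
    then have "u permutes {1..m}" by (rule bij_imp_permutes) (auto simp: u_def)
    moreover have "xs = ?f u"
      by (rule nth_equalityI) (use len in \<open>auto simp: u_def nth_map_upt\<close>)
    ultimately show "xs \<in> ?f ` ?P" by blast
  qed
  have "eulerian_poly m = (\<Sum>u\<in>?P. X ^ desl (?f u))"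
    unfolding eulerian_poly_def X_pow des_desl ..
  also have "\<dots> = Dl {1..m}"
    unfolding Dl_def using sum.reindex[OF inj, of "\<lambda>xs. X ^ desl xs"] img by simp
  finally show ?thesis .
qed

lemma eulerian_Ppol: "eulerian_poly m = Ppol m"
  using eulerian_Dl Dl_Ppol[of "{1..m}"] by simp




lemma sd_memD: "C \<in> sd B \<Longrightarrow> C \<subseteq> Pow B - {{}} \<and> is_chain C"
  by (simp add: sd_def)

lemma finite_sd: "finite B \<Longrightarrow> finite (sd B)"
  unfolding sd_def by (rule finite_subset[of _ "Pow (Pow B)"]) auto

lemma chain_card_le:
  assumes fin: "finite B" and C: "C \<in> sd B"
  shows "finite C \<and> card C \<le> card B"
proof -
  have sub: "C \<subseteq> Pow B - {{}}" and ch: "is_chain C" using sd_memD[OF C] by auto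
  have finC: "finite C" using sub fin by (rule_tac finite_subset[of _ "Pow B"]) auto
  have inj: "inj_on card C"
  proof (rule inj_onI)
    fix S T assume S: "S \<in> C" and T: "T \<in> C" and eq: "card S = card T"
    have fS: "finite S" "finite T" using S T sub fin by (auto intro: finite_subset)
    from ch S T have "S \<subseteq> T \<or> T \<subseteq> S" unfolding is_chain_def by blast
    then show "S = T" using card_subset_eq fS eq by metis
  qed
  have "card ` C \<subseteq> {1..card B}"
  proof
    fix k assume "k \<in> card ` C"
    then obtain S where S: "S \<in> C" "k = card S" by auto
    have "S \<subseteq> B" "S \<noteq> {}" using S sub by auto
    then show "k \<in> {1..card B}" using S fin
      by (auto simp: card_mono Suc_le_eq card_gt_0_iff intro: finite_subset)
  qed
  then have "card (card ` C) \<le> card B" using card_mono[of "{1..card B}"] by fastforce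
  then show ?thesis using card_image[OF inj] finC by simp
qed

lemma exists_max_chain:
  assumes "finite B" shows "\<exists>C\<in>sd B. card C = card B"
  using assms
proof (induction B rule: finite_induct)
  case empty
  show ?case by (rule bexI[where x="{}"]) (auto simp: sd_def is_chain_def)
next
  case (insert a B)
  then obtain C where C: "C \<in> sd B" "card C = card B" by blast
  have sub: "C \<subseteq> Pow B - {{}}" and ch: "is_chain C" using sd_memD[OF C(1)] by auto
  have finC: "finite C" using chain_card_le[OF insert(1) C(1)] by simp
  have nin: "insert a B \<notin> C" using sub insert(2) by auto
  have "insert (insert a B) C \<in> sd (insert a B)"
    using sub ch unfolding sd_def is_chain_def by auto
  moreover have "card (insert (insert a B) C) = card (insert a B)"
    using finC nin C(2) insert by simp
  ultimately show ?case by blast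
qed

lemma finite_ne_chain_max:
  assumes "finite L" "L \<noteq> {}" "is_chain L"
  shows "\<exists>M\<in>L. \<forall>T\<in>L. T \<subseteq> M"
  using assms
proof (induction L rule: finite_ne_induct)
  case (singleton x) then show ?case by auto
next
  case (insert x F)
  have "is_chain F" using insert.prems unfolding is_chain_def by auto
  then obtain M where M: "M \<in> F" "\<forall>T\<in>F. T \<subseteq> M" using insert.IH by blast
  have "x \<subseteq> M \<or> M \<subseteq> x" using insert.prems M(1) unfolding is_chain_def by auto
  then show ?case
  proof
    assume "x \<subseteq> M" then show ?thesis using M by auto
  next
    assume "M \<subseteq> x" then show ?thesis using M by auto
  qed
qed

definition Psi :: "'a \<Rightarrow> 'a set set \<times> 'a set \<times> bool \<Rightarrow> 'a set set" where
  "Psi a x = (case x of (C', U, e) \<Rightarrow>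
     {T\<in>C'. T \<subseteq> U} \<union> insert a ` {T\<in>C'. \<not> T \<subseteq> U} \<union> (if e then {insert a U} else {}))"

definition Phi :: "'a \<Rightarrow> 'a set set \<Rightarrow> 'a set set \<times> 'a set \<times> bool" where
  "Phi a C = ((\<lambda>T. T - {a}) ` C - {{}}, \<Union>{T\<in>C. a \<notin> T}, insert a (\<Union>{T\<in>C. a \<notin> T}) \<in> C)"

definition PDom :: "'a set \<Rightarrow> ('a set set \<times> 'a set \<times> bool) set" where
  "PDom B = Sigma (sd B) (\<lambda>C'. insert {} C' \<times> UNIV)"

lemma U_below:
  assumes "C' \<in> sd B" "U \<in> insert {} C'" "T \<in> C'" "\<not> T \<subseteq> U"
  shows "U \<subseteq> T"
  using assms unfolding sd_def is_chain_def by auto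

lemma Psi_in:
  assumes aB: "a \<notin> B" and C': "C' \<in> sd B" and U: "U \<in> insert {} C'"
  shows "Psi a (C', U, e) \<in> sd (insert a B)"
proof -
  have sub: "C' \<subseteq> Pow B - {{}}" and ch: "is_chain C'" using sd_memD[OF C'] by auto
  have UB: "U \<subseteq> B" using U sub by auto
  have below: "\<And>T. T \<in> C' \<Longrightarrow> \<not> T \<subseteq> U \<Longrightarrow> U \<subseteq> T" using U_below[OF C' U] by blast
  have "Psi a (C', U, e) \<subseteq> Pow (insert a B) - {{}}"
    using sub UB unfolding Psi_def by auto
  moreover have "is_chain (Psi a (C', U, e))"
    unfolding is_chain_def
  proof (intro ballI)
    fix S1 S2 assume S1: "S1 \<in> Psi a (C', U, e)" and S2: "S2 \<in> Psi a (C', U, e)"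
    have cmp: "\<And>T1 T2. T1 \<in> C' \<Longrightarrow> T2 \<in> C' \<Longrightarrow> T1 \<subseteq> T2 \<or> T2 \<subseteq> T1"
      using ch unfolding is_chain_def by blast
    show "S1 \<subseteq> S2 \<or> S2 \<subseteq> S1"
      using S1 S2 unfolding Psi_def
      apply (auto split: if_splits)
      using cmp below by blast+
  qed
  ultimately show ?thesis unfolding sd_def by simp
qed

lemma Phi_Psi:
  assumes aB: "a \<notin> B" and C': "C' \<in> sd B" and U: "U \<in> insert {} C'"
  shows "Phi a (Psi a (C', U, e)) = (C', U, e)"
proof -
  have sub: "C' \<subseteq> Pow B - {{}}" and ch: "is_chain C'" using sd_memD[OF C'] by auto
  have UB: "U \<subseteq> B" using U sub by auto
  have aT: "\<And>T. T \<in> C' \<Longrightarrow> a \<notin> T" using sub aB by auto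
  have aU: "a \<notin> U" using UB aB by auto
  let ?P = "Psi a (C', U, e)"
  have i: "(\<lambda>T. T - {a}) ` ?P - {{}} = C'"
  proof -
    have "(\<lambda>T. T - {a}) ` ?P = {T\<in>C'. T \<subseteq> U} \<union> {T\<in>C'. \<not> T \<subseteq> U} \<union> (if e then {U} else {})"
      unfolding Psi_def using aT aU
      by (auto simp: image_Un image_image)
    also have "\<dots> = C' \<union> (if e then {U} else {})" by auto
    finally show ?thesis using U sub by auto
  qed
  have Lset: "{T\<in>?P. a \<notin> T} = {T\<in>C'. T \<subseteq> U}"
    unfolding Psi_def using aT by auto
  have ii: "\<Union>{T\<in>C'. T \<subseteq> U} = U"
  proof (cases "U = {}")
    case True then show ?thesis by auto
  next
    case False then have "U \<in> C'" using U by simp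
    then show ?thesis by auto
  qed
  have iii: "(insert a U \<in> ?P) = e"
  proof -
    have "insert a U \<notin> {T\<in>C'. T \<subseteq> U}" using aT by auto
    moreover have "insert a U \<notin> insert a ` {T\<in>C'. \<not> T \<subseteq> U}"
    proof
      assume "insert a U \<in> insert a ` {T\<in>C'. \<not> T \<subseteq> U}"
      then obtain T where T: "T \<in> C'" "\<not> T \<subseteq> U" "insert a U = insert a T" by auto
      then have "U = T" using aT[OF T(1)] aU by (metis Diff_insert_absorb)
      then show False using T by simp
    qed
    ultimately show ?thesis unfolding Psi_def by auto
  qed
  show ?thesis unfolding Phi_def using i Lset ii iii by simp
qed

lemma Phi_facts:
  assumes aB: "a \<notin> B" and fin: "finite B" and C: "C \<in> sd (insert a B)"
  shows "Phi a C \<in> PDom B \<and> Psi a (Phi a C) = C"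
proof -
  have sub: "C \<subseteq> Pow (insert a B) - {{}}" and ch: "is_chain C" using sd_memD[OF C] by auto
  have finC: "finite C" using chain_card_le[OF _ C] fin by simp
  have cmp: "\<And>T1 T2. T1 \<in> C \<Longrightarrow> T2 \<in> C \<Longrightarrow> T1 \<subseteq> T2 \<or> T2 \<subseteq> T1"
    using ch unfolding is_chain_def by blast
  define L where "L = {T\<in>C. a \<notin> T}"
  define U where "U = \<Union>L"
  define C' where "C' = (\<lambda>T. T - {a}) ` C - {{}}"
  define e where "e = (insert a U \<in> C)"
  have Phi: "Phi a C = (C', U, e)" unfolding Phi_def C'_def U_def L_def e_def by simp
  have C'sd: "C' \<in> sd B"
  proof -
    have "C' \<subseteq> Pow B - {{}}" unfolding C'_def using sub by auto
    moreover have "is_chain C'" unfolding is_chain_def C'_def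
      using cmp by auto
    ultimately show ?thesis unfolding sd_def by simp
  qed
  have UL: "U = {} \<or> U \<in> L"
  proof (cases "L = {}")
    case True then show ?thesis unfolding U_def by simp
  next
    case False
    have "is_chain L" using ch unfolding is_chain_def L_def by auto
    moreover have "finite L" using finC unfolding L_def by simp
    ultimately obtain M where "M \<in> L" "\<forall>T\<in>L. T \<subseteq> M" using finite_ne_chain_max False by blast
    then have "U = M" unfolding U_def by auto
    then show ?thesis using \<open>M \<in> L\<close> by simp
  qed
  have UC': "U \<in> insert {} C'"
  proof (cases "U = {}")
    case False
    then have "U \<in> L" using UL by simp
    then have "U \<in> C" "a \<notin> U" unfolding L_def by auto
    then show ?thesis unfolding C'_def using False by (auto intro!: image_eqI[where x=U])
  qed simp
  have lowU: "\<And>T. T \<in> C \<Longrightarrow> a \<notin> T \<Longrightarrow> T \<subseteq> U" unfolding U_def L_def by auto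
  have upU: "U \<subseteq> T - {a}" if T: "T \<in> C" "a \<in> T" for T
  proof
    fix x assume "x \<in> U"
    then obtain T' where T': "T' \<in> C" "a \<notin> T'" "x \<in> T'" unfolding U_def L_def by auto
    have "T' \<subseteq> T" using cmp[OF T' (1) T(1)] T T' by auto
    then show "x \<in> T - {a}" using T' by auto
  qed
  have Ucase: "U \<in> C" if "U \<noteq> {}" using UL that unfolding L_def by auto
  have "Psi a (C', U, e) = C"
  proof (rule set_eqI, rule iffI)
    fix S assume S: "S \<in> Psi a (C', U, e)"
    show "S \<in> C"
    proof -
      { assume S1: "S \<in> C'" "S \<subseteq> U"
        then obtain T where T: "T \<in> C" "S = T - {a}" "S \<noteq> {}" unfolding C'_def by auto
        have "S \<in> C"
        proof (cases "a \<in> T")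
          case True
          then have "S = U" using upU[OF T(1) True] T S1 by auto
          then show ?thesis using Ucase T(3) by simp
        next
          case False then show ?thesis using T by simp
        qed }
      moreover
      { assume S2: "S \<in> insert a ` {T\<in>C'. \<not> T \<subseteq> U}"
        then obtain T where T: "T \<in> C'" "\<not> T \<subseteq> U" "S = insert a T" by auto
        then obtain T0 where T0: "T0 \<in> C" "T = T0 - {a}" unfolding C'_def by auto
        have "a \<in> T0" using lowU[OF T0(1)] T0 T by auto
        then have "S = T0" using T T0 by auto
        then have "S \<in> C" using T0 by simp }
      moreover
      { assume "e" "S = insert a U" then have "S \<in> C" unfolding e_def by simp }
      ultimately show ?thesis using S unfolding Psi_def by (auto split: if_splits)
    qed
  next
    fix S assume S: "S \<in> C"
    have Sne: "S \<noteq> {}" using S sub by auto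
    show "S \<in> Psi a (C', U, e)"
    proof (cases "a \<in> S")
      case False
      then have "S \<in> C'" "S \<subseteq> U" unfolding C'_def using S Sne lowU
        by (auto intro!: image_eqI[where x=S])
      then show ?thesis unfolding Psi_def by auto
    next
      case True
      show ?thesis
      proof (cases "S - {a} \<subseteq> U")
        case True2: True
        then have "S - {a} = U" using upU[OF S True] by auto
        then have "S = insert a U" using True by auto
        then have "e" unfolding e_def using S by simp
        then show ?thesis unfolding Psi_def using \<open>S = insert a U\<close> by simp
      next
        case False
        then have "S - {a} \<noteq> {}" by auto
        moreover have "S - {a} \<in> (\<lambda>T. T - {a}) ` C" using S by (rule imageI)
        ultimately have h1: "S - {a} \<in> C'" unfolding C'_def by blast
        have h2: "S = insert a (S - {a})" using True by auto
        have "S \<in> insert a ` {T\<in>C'. \<not> T \<subseteq> U}"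
          by (rule image_eqI[where f="insert a" and x="S - {a}", OF h2]) (use h1 False in simp)
        then show ?thesis unfolding Psi_def by blast
      qed
    qed
  qed
  moreover have "Phi a C \<in> PDom B" unfolding Phi PDom_def using C'sd UC' by simp
  ultimately show ?thesis using Phi by simp
qed

lemma Psi_card:
  assumes aB: "a \<notin> B" and fin: "finite B" and C': "C' \<in> sd B" and U: "U \<in> insert {} C'"
  shows "card (Psi a (C', U, e)) = card C' + (if e then 1 else 0)"
proof -
  have sub: "C' \<subseteq> Pow B - {{}}" using sd_memD[OF C'] by auto
  have finC: "finite C'" using chain_card_le[OF fin C'] by simp
  have UB: "U \<subseteq> B" using U sub by auto
  have aT: "\<And>T. T \<in> C' \<Longrightarrow> a \<notin> T" using sub aB by auto
  have aU: "a \<notin> U" using UB aB by auto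
  let ?L = "{T\<in>C'. T \<subseteq> U}" and ?R = "{T\<in>C'. \<not> T \<subseteq> U}"
  have inj: "inj_on (insert a) ?R"
    by (rule inj_onI) (metis (no_types, lifting) Diff_insert_absorb aT mem_Collect_eq)
  have d1: "?L \<inter> insert a ` ?R = {}" using aT by auto
  have cLR: "card (?L \<union> insert a ` ?R) = card C'"
  proof -
    have "card (?L \<union> insert a ` ?R) = card ?L + card (insert a ` ?R)"
      using d1 finC by (intro card_Un_disjoint) auto
    also have "\<dots> = card ?L + card ?R" using card_image[OF inj] by simp
    also have "\<dots> = card C'"
    proof -
      have "?L \<union> ?R = C'" "?L \<inter> ?R = {}" by auto
      then show ?thesis using card_Un_disjoint[of ?L ?R] finC by simp
    qed
    finally show ?thesis .
  qed
  have nin: "insert a U \<notin> ?L \<union> insert a ` ?R"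
  proof
    assume "insert a U \<in> ?L \<union> insert a ` ?R"
    then show False
    proof
      assume "insert a U \<in> ?L" then show False using aT by auto
    next
      assume "insert a U \<in> insert a ` ?R"
      then obtain T where T: "T \<in> C'" "\<not> T \<subseteq> U" "insert a U = insert a T" by auto
      then have "U = T" using aT[OF T(1)] aU by (metis Diff_insert_absorb)
      then show False using T by simp
    qed
  qed
  have "Psi a (C', U, e) = (if e then insert (insert a U) (?L \<union> insert a ` ?R) else ?L \<union> insert a ` ?R)"
    unfolding Psi_def by auto
  then show ?thesis using cLR nin finC by simp
qed

lemma sd_insert_sum:
  fixes g :: "nat \<Rightarrow> 'b::comm_ring_1"
  assumes aB: "a \<notin> B" and fin: "finite B"
  shows "(\<Sum>C\<in>sd (insert a B). g (card C)) = (\<Sum>C'\<in>sd B. of_nat (card C' + 1) * (g (card C') + g (card C' + 1)))"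
proof -
  have inj: "inj_on (Psi a) (PDom B)"
  proof (rule inj_onI)
    fix x y assume x: "x \<in> PDom B" and y: "y \<in> PDom B" and eq: "Psi a x = Psi a y"
    obtain C1 U1 e1 where xe: "x = (C1, U1, e1)" by (cases x) auto
    obtain C2 U2 e2 where ye: "y = (C2, U2, e2)" by (cases y) auto
    have "Phi a (Psi a x) = x" using x xe Phi_Psi[OF aB] by (auto simp: PDom_def)
    moreover have "Phi a (Psi a y) = y" using y ye Phi_Psi[OF aB] by (auto simp: PDom_def)
    ultimately show "x = y" using eq by metis
  qed
  have img: "Psi a ` PDom B = sd (insert a B)"
  proof (intro set_eqI iffI)
    fix C assume "C \<in> Psi a ` PDom B"
    then obtain x where x: "x \<in> PDom B" "C = Psi a x" by auto
    obtain C1 U1 e1 where xe: "x = (C1, U1, e1)" by (cases x) auto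
    show "C \<in> sd (insert a B)" using x xe Psi_in[OF aB] by (auto simp: PDom_def)
  next
    fix C assume "C \<in> sd (insert a B)"
    then have "Phi a C \<in> PDom B" "Psi a (Phi a C) = C" using Phi_facts[OF aB fin] by auto
    then show "C \<in> Psi a ` PDom B" by (metis imageI)
  qed
  have "(\<Sum>C\<in>sd (insert a B). g (card C)) = (\<Sum>x\<in>PDom B. g (card (Psi a x)))"
    using sum.reindex[OF inj, of "\<lambda>C. g (card C)"] img by simp
  also have "\<dots> = (\<Sum>C'\<in>sd B. \<Sum>y\<in>insert {} C' \<times> UNIV. g (card (Psi a (C', y))))"
  proof -
    have f1: "finite (sd B)" using finite_sd[OF fin] .
    have f2: "\<forall>C'\<in>sd B. finite (insert {} C' \<times> (UNIV :: bool set))"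
      using chain_card_le[OF fin] by auto
    show ?thesis unfolding PDom_def
      using sum.Sigma[OF f1 f2, of "\<lambda>C' y. g (card (Psi a (C', y)))"] by (simp add: case_prod_unfold)
  qed
  also have "\<dots> = (\<Sum>C'\<in>sd B. of_nat (card C' + 1) * (g (card C') + g (card C' + 1)))"
  proof (intro sum.cong refl)
    fix C' assume C': "C' \<in> sd B"
    have finC: "finite C'" using chain_card_le[OF fin C'] by simp
    have ne: "{} \<notin> C'" using sd_memD[OF C'] by auto
    have "(\<Sum>y\<in>insert {} C' \<times> UNIV. g (card (Psi a (C', y))))
        = (\<Sum>U\<in>insert {} C'. \<Sum>e\<in>UNIV. g (card (Psi a (C', U, e))))"
      using sum.cartesian_product[of "\<lambda>U e. g (card (Psi a (C', U, e)))" "UNIV :: bool set" "insert {} C'"]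
      by (simp add: case_prod_unfold)
    also have "\<dots> = (\<Sum>U\<in>insert {} C'. g (card C') + g (card C' + 1))"
    proof (intro sum.cong refl)
      fix U assume U: "U \<in> insert {} C'"
      show "(\<Sum>e\<in>UNIV. g (card (Psi a (C', U, e)))) = g (card C') + g (card C' + 1)"
        using Psi_card[OF aB fin C' U] by (simp add: UNIV_bool add.commute)
    qed
    also have "\<dots> = of_nat (card C' + 1) * (g (card C') + g (card C' + 1))"
      using finC ne by simp
    finally show "(\<Sum>y\<in>insert {} C' \<times> UNIV. g (card (Psi a (C', y)))) = \<dots>" .
  qed
  finally show ?thesis .
qed

definition HB :: "'a set \<Rightarrow> int poly" where
  "HB B = (\<Sum>C\<in>sd B. X ^ card C * (1 - X) ^ (card B - card C))"

lemma sd_empty: "sd {} = {{}}"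
  unfolding sd_def is_chain_def by auto

lemma HB_Ppol: "finite B \<Longrightarrow> HB B = Ppol (card B)"
proof (induction B rule: finite_induct)
  case empty
  show ?case by (simp add: HB_def sd_empty)
next
  case (insert a B)
  define N where "N = card B"
  have cI: "card (insert a B) = Suc N" using insert N_def by simp
  have "HB (insert a B) = (\<Sum>C\<in>sd (insert a B). (\<lambda>k. X ^ k * (1 - X) ^ (Suc N - k)) (card C))"
    unfolding HB_def cI ..
  also have "\<dots> = (\<Sum>C'\<in>sd B. of_nat (card C' + 1) * (X ^ card C' * (1 - X) ^ (Suc N - card C')
       + X ^ (card C' + 1) * (1 - X) ^ (Suc N - (card C' + 1))))"
    by (rule sd_insert_sum[OF insert(2,1)])
  also have "\<dots> = (\<Sum>C'\<in>sd B. Top N (X ^ card C' * (1 - X) ^ (N - card C')))"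
  proof (intro sum.cong refl)
    fix C' assume C': "C' \<in> sd B"
    have le: "card C' \<le> N" using chain_card_le[OF insert(1) C'] N_def by simp
    have "X ^ card C' * (1 - X) ^ (Suc N - card C') + X ^ (card C' + 1) * (1 - X) ^ (Suc N - (card C' + 1))
        = X ^ card C' * (1 - X) ^ (N - card C')"
    proof -
      have "Suc N - card C' = Suc (N - card C')" using le by simp
      moreover have "Suc N - (card C' + 1) = N - card C'" by simp
      ultimately show ?thesis by (simp add: algebra_simps)
    qed
    then show "of_nat (card C' + 1) * (X ^ card C' * (1 - X) ^ (Suc N - card C')
       + X ^ (card C' + 1) * (1 - X) ^ (Suc N - (card C' + 1))) = Top N (X ^ card C' * (1 - X) ^ (N - card C'))"
      using Top_chain[OF le] by simp
  qed
  also have "\<dots> = Top N (HB B)" unfolding HB_def Top_sum N_def ..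
  also have "\<dots> = Ppol (card (insert a B))" using insert.IH cI N_def by simp
  finally show ?case .
qed




definition hp :: "'a set set set \<Rightarrow> nat \<Rightarrow> int poly" where
  "hp Ch R = (\<Sum>D\<in>Ch. X ^ card D * (1 - X) ^ (R - card D))"

definition IC :: "'a set \<Rightarrow> 'a set \<Rightarrow> 'a set set set" where
  "IC P Q = {D. D \<subseteq> {T. P \<subset> T \<and> T \<subseteq> Q} \<and> is_chain D}"

definition OC :: "'a set \<Rightarrow> 'a set \<Rightarrow> 'a set set set" where
  "OC P Q = {D. D \<subseteq> {T. P \<subset> T \<and> T \<subset> Q} \<and> is_chain D}"

definition shiftc :: "'a set \<Rightarrow> 'a set set \<Rightarrow> 'a set set" where
  "shiftc P C = (\<lambda>T. T \<union> P) ` C"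

lemma shiftc_facts:
  assumes PQ: "P \<subseteq> Q"
  shows "inj_on (shiftc P) (sd (Q - P))"
    and "shiftc P ` sd (Q - P) = IC P Q"
    and "C \<in> sd (Q - P) \<Longrightarrow> card (shiftc P C) = card C"
    and "C \<in> sd (Q - P) \<Longrightarrow> Q \<in> shiftc P C \<longleftrightarrow> Q - P \<in> C"
proof -
  have bk: "(\<lambda>T. T - P) ` shiftc P C = C" if CC: "C \<in> sd (Q - P)" for C
  proof -
    have "\<And>T. T \<in> C \<Longrightarrow> T \<inter> P = {}" using CC unfolding sd_def by auto
    then show ?thesis unfolding shiftc_def image_image by (auto simp: Un_Diff) (metis Diff_triv image_iff)
  qed
  show "inj_on (shiftc P) (sd (Q - P))"
    by (rule inj_onI) (metis bk)
  show "C \<in> sd (Q - P) \<Longrightarrow> card (shiftc P C) = card C"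
  proof -
    assume C: "C \<in> sd (Q - P)"
    have "inj_on (\<lambda>T. T \<union> P) C"
    proof (rule inj_onI)
      fix S T assume "S \<in> C" "T \<in> C" "S \<union> P = T \<union> P"
      moreover have "S \<inter> P = {}" "T \<inter> P = {}" using C \<open>S \<in> C\<close> \<open>T \<in> C\<close> unfolding sd_def by auto
      ultimately show "S = T" by blast
    qed
    then show ?thesis unfolding shiftc_def by (rule card_image)
  qed
  show "C \<in> sd (Q - P) \<Longrightarrow> Q \<in> shiftc P C \<longleftrightarrow> Q - P \<in> C"
  proof -
    assume C: "C \<in> sd (Q - P)"
    have dis: "\<And>T. T \<in> C \<Longrightarrow> T \<inter> P = {}" using C unfolding sd_def by auto
    show ?thesis
    proof
      assume "Q \<in> shiftc P C"
      then obtain T where "T \<in> C" "Q = T \<union> P" unfolding shiftc_def by auto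
      then have "T = Q - P" using dis by auto
      then show "Q - P \<in> C" using \<open>T \<in> C\<close> by simp
    next
      assume "Q - P \<in> C"
      then show "Q \<in> shiftc P C" unfolding shiftc_def using PQ by (auto intro!: image_eqI[where x="Q - P"])
    qed
  qed
  show "shiftc P ` sd (Q - P) = IC P Q"
  proof (intro set_eqI iffI)
    fix D assume "D \<in> shiftc P ` sd (Q - P)"
    then obtain C where C: "C \<in> sd (Q - P)" "D = shiftc P C" by auto
    have sub: "C \<subseteq> Pow (Q - P) - {{}}" and ch: "is_chain C" using sd_memD[OF C(1)] by auto
    have "D \<subseteq> {T. P \<subset> T \<and> T \<subseteq> Q}" unfolding C(2) shiftc_def using sub PQ by auto
    moreover have "is_chain D" unfolding C(2) shiftc_def is_chain_def using ch unfolding is_chain_def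
      by auto
    ultimately show "D \<in> IC P Q" unfolding IC_def by simp
  next
    fix D assume D: "D \<in> IC P Q"
    have sub: "D \<subseteq> {T. P \<subset> T \<and> T \<subseteq> Q}" and ch: "is_chain D" using D unfolding IC_def by auto
    let ?C = "(\<lambda>T. T - P) ` D"
    have "?C \<in> sd (Q - P)"
    proof -
      have "?C \<subseteq> Pow (Q - P) - {{}}" using sub by auto
      moreover have "is_chain ?C" using ch unfolding is_chain_def by auto
      ultimately show ?thesis unfolding sd_def by simp
    qed
    moreover have "shiftc P ?C = D" unfolding shiftc_def image_image using sub
      by (auto simp: Un_absorb2 psubset_imp_subset)
    ultimately show "D \<in> shiftc P ` sd (Q - P)" by blast
  qed
qed

lemma sd_open_facts:
  assumes fin: "finite B" and ne: "B \<noteq> {}"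
  defines "A \<equiv> {C\<in>sd B. B \<notin> C}"
  shows "hp A (card B - 1) = Ppol (card B)"
    and "\<forall>C\<in>A. card C \<le> card B - 1"
    and "\<exists>C\<in>A. card C = card B - 1"
    and "finite A"
proof -
  have finsd: "finite (sd B)" using finite_sd[OF fin] .
  show finA: "finite A" unfolding A_def using finsd by simp
  have insA: "insert B C \<in> sd B" if "C \<in> A" for C
    using that ne unfolding A_def sd_def is_chain_def by auto
  have finC: "finite C" if "C \<in> A" for C using that chain_card_le[OF fin] unfolding A_def by auto
  have cins: "card (insert B C) = card C + 1" if "C \<in> A" for C
    using that finC[OF that] unfolding A_def by simp
  show bound: "\<forall>C\<in>A. card C \<le> card B - 1"
  proof
    fix C assume C: "C \<in> A"
    have "card (insert B C) \<le> card B" using chain_card_le[OF fin insA[OF C]] by simp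
    then show "card C \<le> card B - 1" using cins[OF C] by simp
  qed
  show "\<exists>C\<in>A. card C = card B - 1"
  proof -
    obtain C0 where C0: "C0 \<in> sd B" "card C0 = card B" using exists_max_chain[OF fin] by blast
    have finC0: "finite C0" using chain_card_le[OF fin C0(1)] by simp
    have "C0 - {B} \<in> A" using C0(1) unfolding A_def sd_def is_chain_def by auto
    moreover have "card (C0 - {B}) \<ge> card C0 - 1" using finC0 by (simp add: card_Diff_singleton_if)
    ultimately have "card (C0 - {B}) = card B - 1" using bound C0(2) by (metis le_antisym)
    then show ?thesis using \<open>C0 - {B} \<in> A\<close> by blast
  qed
  have split: "sd B = A \<union> insert B ` A"
  proof (intro set_eqI iffI)
    fix C assume C: "C \<in> sd B"
    show "C \<in> A \<union> insert B ` A"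
    proof (cases "B \<in> C")
      case True
      then have "C - {B} \<in> A" "C = insert B (C - {B})" using C unfolding A_def sd_def is_chain_def by auto
      then show ?thesis by blast
    next
      case False then show ?thesis using C unfolding A_def by simp
    qed
  next
    fix C assume "C \<in> A \<union> insert B ` A"
    then show "C \<in> sd B" using insA unfolding A_def by auto
  qed
  have disj: "A \<inter> insert B ` A = {}" unfolding A_def by auto
  have inj: "inj_on (insert B) A"
  proof (rule inj_onI)
    fix C1 C2 assume "C1 \<in> A" "C2 \<in> A" "insert B C1 = insert B C2"
    then have "B \<notin> C1" "B \<notin> C2" "insert B C1 = insert B C2" unfolding A_def by auto
    then show "C1 = C2" by (metis Diff_insert_absorb)
  qed
  define n where "n = card B"
  have "HB B = (\<Sum>C\<in>A. X ^ card C * (1 - X) ^ (n - card C)) + (\<Sum>C\<in>insert B ` A. X ^ card C * (1 - X) ^ (n - card C))"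
    unfolding HB_def n_def split using finA disj by (intro sum.union_disjoint) auto
  also have "(\<Sum>C\<in>insert B ` A. X ^ card C * (1 - X) ^ (n - card C)) = (\<Sum>C\<in>A. X ^ (card C + 1) * (1 - X) ^ (n - (card C + 1)))"
    using sum.reindex[OF inj, of "\<lambda>C. X ^ card C * (1 - X) ^ (n - card C)"] cins by simp
  also have "(\<Sum>C\<in>A. X ^ card C * (1 - X) ^ (n - card C)) + \<dots> = (\<Sum>C\<in>A. X ^ card C * (1 - X) ^ (n - 1 - card C))"
    unfolding sum.distrib[symmetric]
  proof (intro sum.cong refl)
    fix C assume C: "C \<in> A"
    have le: "card C \<le> n - 1" using bound C n_def by simp
    have n1: "n \<ge> 1" using ne fin n_def by (simp add: Suc_leI card_gt_0_iff)
    have "n - card C = Suc (n - 1 - card C)" using le n1 by simp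
    moreover have "n - (card C + 1) = n - 1 - card C" by simp
    ultimately show "X ^ card C * (1 - X) ^ (n - card C) + X ^ (card C + 1) * (1 - X) ^ (n - (card C + 1)) =
         X ^ card C * (1 - X) ^ (n - 1 - card C)" by (simp add: algebra_simps)
  qed
  finally show "hp A (card B - 1) = Ppol (card B)" using HB_Ppol[OF fin] unfolding hp_def n_def by simp
qed

lemma IC_facts:
  assumes PQ: "P \<subseteq> Q" and fin: "finite Q"
  shows "hp (IC P Q) (card (Q - P)) = Ppol (card (Q - P))"
    and "\<forall>D\<in>IC P Q. card D \<le> card (Q - P)"
    and "\<exists>D\<in>IC P Q. card D = card (Q - P)"
    and "finite (IC P Q)"
proof -
  note sf = shiftc_facts[OF PQ]
  have finB: "finite (Q - P)" using fin by simp
  show "finite (IC P Q)" using sf(2)[symmetric] finite_sd[OF finB] by simp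
  show "hp (IC P Q) (card (Q - P)) = Ppol (card (Q - P))"
  proof -
    let ?f = "\<lambda>D. X ^ card D * (1 - X) ^ (card (Q - P) - card D)"
    have "hp (IC P Q) (card (Q - P)) = (\<Sum>C\<in>sd (Q - P). ?f (shiftc P C))"
      unfolding hp_def sf(2)[symmetric] using sum.reindex[OF sf(1), of ?f] by simp
    also have "\<dots> = HB (Q - P)" unfolding HB_def by (intro sum.cong refl) (simp add: sf(3))
    finally show ?thesis using HB_Ppol[OF finB] by simp
  qed
  show "\<forall>D\<in>IC P Q. card D \<le> card (Q - P)"
    unfolding sf(2)[symmetric] using sf(3) chain_card_le[OF finB] by auto
  show "\<exists>D\<in>IC P Q. card D = card (Q - P)"
  proof -
    obtain C where "C \<in> sd (Q - P)" "card C = card (Q - P)" using exists_max_chain[OF finB] by blast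
    then show ?thesis unfolding sf(2)[symmetric] using sf(3) by (intro bexI[where x="shiftc P C"]) auto
  qed
qed

lemma OC_facts:
  assumes PQ: "P \<subset> Q" and fin: "finite Q"
  shows "hp (OC P Q) (card (Q - P) - 1) = Ppol (card (Q - P))"
    and "\<forall>D\<in>OC P Q. card D \<le> card (Q - P) - 1"
    and "\<exists>D\<in>OC P Q. card D = card (Q - P) - 1"
    and "finite (OC P Q)"
proof -
  have PQ': "P \<subseteq> Q" using PQ by auto
  note sf = shiftc_facts[OF PQ']
  have finB: "finite (Q - P)" using fin by simp
  have neB: "Q - P \<noteq> {}" using PQ by auto
  note of = sd_open_facts[OF finB neB]
  let ?A = "{C\<in>sd (Q - P). Q - P \<notin> C}"
  have eq: "OC P Q = shiftc P ` ?A"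
  proof -
    have "OC P Q = {D\<in>IC P Q. Q \<notin> D}" unfolding OC_def IC_def by auto
    also have "\<dots> = {D\<in>shiftc P ` sd (Q - P). Q \<notin> D}" using sf(2) by simp
    also have "\<dots> = shiftc P ` ?A" using sf(4) by auto
    finally show ?thesis .
  qed
  have inj: "inj_on (shiftc P) ?A" using sf(1) by (rule inj_on_subset) auto
  show "finite (OC P Q)" unfolding eq using of(4) by simp
  show "hp (OC P Q) (card (Q - P) - 1) = Ppol (card (Q - P))"
  proof -
    let ?f = "\<lambda>D. X ^ card D * (1 - X) ^ (card (Q - P) - 1 - card D)"
    have "hp (OC P Q) (card (Q - P) - 1) = (\<Sum>C\<in>?A. ?f (shiftc P C))"
      unfolding hp_def eq using sum.reindex[OF inj, of ?f] by simp
    also have "\<dots> = hp ?A (card (Q - P) - 1)" unfolding hp_def by (intro sum.cong refl) (simp add: sf(3))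
    finally show ?thesis using of(1) by simp
  qed
  show "\<forall>D\<in>OC P Q. card D \<le> card (Q - P) - 1"
    unfolding eq using sf(3) of(2) by auto
  show "\<exists>D\<in>OC P Q. card D = card (Q - P) - 1"
  proof -
    obtain C where "C \<in> ?A" "card C = card (Q - P) - 1" using of(3) by blast
    then show ?thesis unfolding eq using sf(3) by (intro bexI[where x="shiftc P C"]) auto
  qed
qed




lemma hpoly_alt: "hpoly L = hp L (cplx_rank L)"
  unfolding hpoly_def hp_def X_pow Y_eq ..

lemma hpoly_product:
  fixes J :: "nat set" and Ch :: "nat \<Rightarrow> 'a set set set" and R :: "nat \<Rightarrow> nat"
  assumes finJ: "finite J"
    and finCh: "\<forall>j\<in>J. finite (Ch j)"
    and L: "L = (\<lambda>p. \<Union>j\<in>J. p j) ` PiE J Ch"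
    and inj: "inj_on (\<lambda>p. \<Union>j\<in>J. p j) (PiE J Ch)"
    and cardU: "\<forall>p\<in>PiE J Ch. card (\<Union>j\<in>J. p j) = (\<Sum>j\<in>J. card (p j))"
    and bnd: "\<forall>j\<in>J. \<forall>D\<in>Ch j. card D \<le> R j"
    and ex: "\<forall>j\<in>J. \<exists>D\<in>Ch j. card D = R j"
  shows "hpoly L = (\<Prod>j\<in>J. hp (Ch j) (R j))"
proof -
  let ?U = "\<lambda>p. \<Union>j\<in>J. p j"
  have finPi: "finite (PiE J Ch)" using finJ finCh by (intro finite_PiE) auto
  have rank: "cplx_rank L = (\<Sum>j\<in>J. R j)"
    unfolding cplx_rank_def
  proof (rule Max_eqI)
    show "finite (card ` L)" unfolding L using finPi by simp
  next
    fix y assume "y \<in> card ` L"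
    then obtain p where p: "p \<in> PiE J Ch" "y = card (?U p)" unfolding L by auto
    then show "y \<le> (\<Sum>j\<in>J. R j)" using cardU bnd by (auto intro!: sum_mono simp: PiE_iff)
  next
    define p0 where "p0 = restrict (\<lambda>j. SOME D. D \<in> Ch j \<and> card D = R j) J"
    have sel: "(SOME D. D \<in> Ch j \<and> card D = R j) \<in> Ch j \<and> card (SOME D. D \<in> Ch j \<and> card D = R j) = R j"
      if j: "j \<in> J" for j
    proof -
      have "\<exists>D. D \<in> Ch j \<and> card D = R j" using ex j by blast
      then show ?thesis by (rule someI_ex)
    qed
    have p0: "p0 \<in> PiE J Ch" unfolding p0_def PiE_iff using sel by simp
    have "card (?U p0) = (\<Sum>j\<in>J. card (p0 j))" using cardU p0 by blast
    also have "\<dots> = (\<Sum>j\<in>J. R j)" unfolding p0_def using sel by (intro sum.cong refl) simp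
    finally have "card (?U p0) = (\<Sum>j\<in>J. R j)" .
    then show "(\<Sum>j\<in>J. R j) \<in> card ` L" unfolding L using p0 by (metis image_eqI)
  qed
  have "hpoly L = (\<Sum>p\<in>PiE J Ch. X ^ card (?U p) * (1 - X) ^ ((\<Sum>j\<in>J. R j) - card (?U p)))"
    unfolding hpoly_alt hp_def rank unfolding L using sum.reindex[OF inj] by simp
  also have "\<dots> = (\<Sum>p\<in>PiE J Ch. \<Prod>j\<in>J. X ^ card (p j) * (1 - X) ^ (R j - card (p j)))"
  proof (intro sum.cong refl)
    fix p assume p: "p \<in> PiE J Ch"
    have le: "\<And>j. j \<in> J \<Longrightarrow> card (p j) \<le> R j" using p bnd by (auto simp: PiE_iff)
    have "(\<Sum>j\<in>J. R j) - card (?U p) = (\<Sum>j\<in>J. R j - card (p j))"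
      using cardU p sum_subtractf_nat[of J "\<lambda>j. card (p j)" R] le by simp
    then show "X ^ card (?U p) * (1 - X) ^ ((\<Sum>j\<in>J. R j) - card (?U p))
        = (\<Prod>j\<in>J. X ^ card (p j) * (1 - X) ^ (R j - card (p j)))"
      using cardU p by (simp add: power_sum prod.distrib)
  qed
  also have "\<dots> = (\<Prod>j\<in>J. hp (Ch j) (R j))"
    unfolding hp_def using prod_sum_PiE[OF finJ, of Ch "\<lambda>j D. X ^ card D * (1 - X) ^ (R j - card D)"] finCh
    by simp
  finally show ?thesis .
qed




context
  fixes S :: "'a set list"
  assumes srt: "sorted_wrt (\<subset>) S" and hdne: "S \<noteq> [] \<longrightarrow> hd S \<noteq> {}"
begin

definition Pv :: "nat \<Rightarrow> 'a set" where
  "Pv i = (if i = 0 then {} else S ! (i - 1))"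

definition Slot :: "'a set \<Rightarrow> nat \<Rightarrow> 'a set set" where
  "Slot F i = (if i < length S then {T. Pv i \<subset> T \<and> T \<subset> S ! i} else {T. Pv (length S) \<subset> T \<and> T \<subseteq> F})"

lemma s1: "i < j \<Longrightarrow> j < length S \<Longrightarrow> S ! i \<subset> S ! j"
  using sorted_wrt_nth_less[OF srt] by blast

lemma s1': "i \<le> j \<Longrightarrow> j < length S \<Longrightarrow> S ! i \<subseteq> S ! j"
  using s1[of i j] by (cases "i = j") auto

lemma s2: "i < length S \<Longrightarrow> Pv i \<subset> S ! i"
proof (cases i)
  case 0
  assume "i < length S"
  then have "S \<noteq> []" by auto
  then show ?thesis using 0 hdne by (auto simp: Pv_def hd_conv_nth)
next
  case (Suc i')
  assume "i < length S"
  then show ?thesis using s1[of i' i] Suc by (simp add: Pv_def)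
qed

lemma s4: "i < j \<Longrightarrow> j \<le> length S \<Longrightarrow> S ! i \<subseteq> Pv j"
  unfolding Pv_def using s1' by auto

lemma s5: "i < length S \<Longrightarrow> S ! i \<subseteq> Pv (length S)"
  using s4 by simp

lemma Sne: "i < length S \<Longrightarrow> S ! i \<noteq> {}"
  using s2 by blast

lemma slot_order:
  assumes "i < j" "j \<le> length S" "T \<in> Slot F i" "T' \<in> Slot F j"
  shows "T \<subset> T'"
proof -
  have "T \<subset> S ! i" using assms by (simp add: Slot_def)
  moreover have "S ! i \<subseteq> Pv j" using s4 assms by simp
  moreover have "Pv j \<subset> T'" using assms by (auto simp: Slot_def split: if_splits)
  ultimately show ?thesis by blast
qed

lemma slot_disj:
  assumes "i \<le> length S" "j \<le> length S" "i \<noteq> j"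
  shows "Slot F i \<inter> Slot F j = {}"
proof -
  { fix T assume "T \<in> Slot F i" "T \<in> Slot F j"
    then have False using slot_order assms
      by (metis less_irrefl linorder_neqE_nat) }
  then show ?thesis by blast
qed

lemma slot_low: "j \<le> length S \<Longrightarrow> T \<in> Slot F j \<Longrightarrow> Pv j \<subset> T"
  by (auto simp: Slot_def split: if_splits)

lemma slot_sub: "j \<le> length S \<Longrightarrow> Pv (length S) \<subseteq> F \<Longrightarrow> T \<in> Slot F j \<Longrightarrow> T \<subseteq> F \<and> T \<noteq> {}"
proof -
  assume j: "j \<le> length S" and PF: "Pv (length S) \<subseteq> F" and T: "T \<in> Slot F j"
  have "T \<noteq> {}" using slot_low[OF j T] by blast
  moreover have "T \<subseteq> F"
  proof (cases "j < length S")
    case True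
    then have "T \<subset> S ! j" using T by (simp add: Slot_def)
    then show ?thesis using s5[OF True] PF by blast
  next
    case False then show ?thesis using T by (simp add: Slot_def)
  qed
  ultimately show ?thesis by simp
qed

lemma slot_notS: "j \<le> length S \<Longrightarrow> T \<in> Slot F j \<Longrightarrow> T \<notin> set S"
proof
  assume j: "j \<le> length S" and T: "T \<in> Slot F j" and "T \<in> set S"
  then obtain m where m: "m < length S" "T = S ! m" by (auto simp: in_set_conv_nth)
  show False
  proof (cases "m < j")
    case True
    then have "S ! m \<subseteq> Pv j" using s4 j by simp
    then show False using slot_low[OF j T] m by blast
  next
    case False
    then have jm: "j \<le> m" by simp
    then have "j < length S" using m by simp
    then have "T \<subset> S ! j" using T by (simp add: Slot_def)
    moreover have "S ! j \<subseteq> S ! m" using s1' jm m by simp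
    ultimately show False using m by blast
  qed
qed

lemma slot_cmpS: "j \<le> length S \<Longrightarrow> T \<in> Slot F j \<Longrightarrow> m < length S \<Longrightarrow> T \<subseteq> S ! m \<or> S ! m \<subseteq> T"
proof -
  assume j: "j \<le> length S" and T: "T \<in> Slot F j" and m: "m < length S"
  show ?thesis
  proof (cases "m < j")
    case True
    then have "S ! m \<subseteq> Pv j" using s4 j by simp
    then show ?thesis using slot_low[OF j T] by blast
  next
    case False
    then have jm: "j \<le> m" by simp
    then have "j < length S" using m by simp
    then have "T \<subset> S ! j" using T by (simp add: Slot_def)
    moreover have "S ! j \<subseteq> S ! m" using s1' jm m by simp
    ultimately show ?thesis by blast
  qed
qed

lemma slot_exists:
  assumes ne: "T \<noteq> {}" and TF: "T \<subseteq> F" and nS: "T \<notin> set S"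
    and cmp: "\<forall>i<length S. T \<subseteq> S ! i \<or> S ! i \<subseteq> T"
  shows "\<exists>j\<le>length S. T \<in> Slot F j"
proof (cases "\<exists>i<length S. T \<subset> S ! i")
  case True
  define i where "i = (LEAST i. i < length S \<and> T \<subset> S ! i)"
  have i: "i < length S" "T \<subset> S ! i" using LeastI_ex[OF True] unfolding i_def by auto
  have "Pv i \<subset> T"
  proof (cases i)
    case 0 then show ?thesis using ne by (auto simp: Pv_def)
  next
    case (Suc i')
    have "\<not> T \<subset> S ! i'" using not_less_Least[of i' "\<lambda>i. i < length S \<and> T \<subset> S ! i"] Suc i
      unfolding i_def by auto
    moreover have "T \<noteq> S ! i'" using nS Suc i by auto
    moreover have "T \<subseteq> S ! i' \<or> S ! i' \<subseteq> T" using cmp Suc i by auto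
    ultimately show ?thesis using Suc by (auto simp: Pv_def)
  qed
  then have "T \<in> Slot F i" using i by (simp add: Slot_def)
  then show ?thesis using i by (intro exI[where x=i]) auto
next
  case False
  have "Pv (length S) \<subset> T"
  proof (cases "length S")
    case 0
    then have "Pv (length S) = {}" unfolding Pv_def by simp
    then show ?thesis using ne by blast
  next
    case (Suc k')
    have "k' < length S" using Suc by simp
    then have "S ! k' \<subseteq> T" "T \<noteq> S ! k'" using cmp False nS by (auto simp: set_conv_nth)
    then show ?thesis using Suc by (auto simp: Pv_def)
  qed
  then have "T \<in> Slot F (length S)" using TF by (simp add: Slot_def)
  then show ?thesis by blast
qed

definition Chs :: "'a set \<Rightarrow> nat \<Rightarrow> 'a set set set" where
  "Chs F j = {D. D \<subseteq> Slot F j \<and> is_chain D}"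

lemma S_chain: "is_chain (set S)"
  unfolding is_chain_def
proof (intro ballI)
  fix A B assume "A \<in> set S" "B \<in> set S"
  then obtain i j where "i < length S" "j < length S" "A = S ! i" "B = S ! j" by (auto simp: in_set_conv_nth)
  then show "A \<subseteq> B \<or> B \<subseteq> A" using s1'[of i j] s1'[of j i] by (cases "i \<le> j") auto
qed

lemma link_eq:
  assumes PF: "Pv (length S) \<subseteq> F"
  shows "link (sd F) (set S) = (\<lambda>p. \<Union>j\<in>{..length S}. p j) ` PiE {..length S} (Chs F)"
proof (intro set_eqI iffI)
  fix D assume "D \<in> link (sd F) (set S)"
  then obtain G where G: "G \<in> sd F" "set S \<subseteq> G" "D = G - set S" unfolding link_def by auto
  have Gsub: "G \<subseteq> Pow F - {{}}" and Gch: "is_chain G" using sd_memD[OF G(1)] by auto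
  have Dch: "is_chain D" using Gch G(3) unfolding is_chain_def by auto
  define p where "p = restrict (\<lambda>j. D \<inter> Slot F j) {..length S}"
  have "p \<in> PiE {..length S} (Chs F)"
    unfolding p_def PiE_iff Chs_def using Dch unfolding is_chain_def by auto
  moreover have "(\<Union>j\<in>{..length S}. p j) = D"
  proof (intro set_eqI iffI)
    fix T assume "T \<in> (\<Union>j\<in>{..length S}. p j)" then show "T \<in> D" unfolding p_def by auto
  next
    fix T assume T: "T \<in> D"
    have "T \<noteq> {}" "T \<subseteq> F" "T \<notin> set S" using T G Gsub by auto
    moreover have "\<forall>i<length S. T \<subseteq> S ! i \<or> S ! i \<subseteq> T"
    proof (intro allI impI)
      fix i assume "i < length S"
      then have "S ! i \<in> G" using G(2) by auto
      moreover have "T \<in> G" using T G(3) by auto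
      ultimately show "T \<subseteq> S ! i \<or> S ! i \<subseteq> T" using Gch unfolding is_chain_def by blast
    qed
    ultimately obtain j where "j \<le> length S" "T \<in> Slot F j" using slot_exists by blast
    then show "T \<in> (\<Union>j\<in>{..length S}. p j)" using T unfolding p_def by auto
  qed
  ultimately show "D \<in> (\<lambda>p. \<Union>j\<in>{..length S}. p j) ` PiE {..length S} (Chs F)" by (metis image_eqI)
next
  fix D assume "D \<in> (\<lambda>p. \<Union>j\<in>{..length S}. p j) ` PiE {..length S} (Chs F)"
  then obtain p where p: "p \<in> PiE {..length S} (Chs F)" and D: "D = (\<Union>j\<in>{..length S}. p j)" by auto
  have pj: "\<And>j. j \<le> length S \<Longrightarrow> p j \<subseteq> Slot F j \<and> is_chain (p j)"
    using p unfolding PiE_iff Chs_def by auto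
  have Dslot: "\<And>T. T \<in> D \<Longrightarrow> \<exists>j\<le>length S. T \<in> Slot F j \<and> T \<in> p j" using D pj by auto
  define G where "G = D \<union> set S"
  have Ssub: "\<And>A. A \<in> set S \<Longrightarrow> A \<noteq> {} \<and> A \<subseteq> F"
  proof -
    fix A assume "A \<in> set S"
    then obtain i where "i < length S" "A = S ! i" by (auto simp: in_set_conv_nth)
    then show "A \<noteq> {} \<and> A \<subseteq> F" using Sne s5 PF by blast
  qed
  have "G \<subseteq> Pow F - {{}}"
    unfolding G_def using Dslot slot_sub[OF _ PF] Ssub by blast
  moreover have "is_chain G"
    unfolding is_chain_def
  proof (intro ballI)
    fix A B assume A: "A \<in> G" and B: "B \<in> G"
    show "A \<subseteq> B \<or> B \<subseteq> A"
    proof (cases "A \<in> set S")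
      case AS: True
      show ?thesis
      proof (cases "B \<in> set S")
        case True then show ?thesis using AS S_chain unfolding is_chain_def by blast
      next
        case False
        then obtain j where j: "j \<le> length S" "B \<in> Slot F j" using B Dslot unfolding G_def by blast
        obtain m where "m < length S" "A = S ! m" using AS by (auto simp: in_set_conv_nth)
        then show ?thesis using slot_cmpS[OF j] by blast
      qed
    next
      case AnS: False
      then obtain i where i: "i \<le> length S" "A \<in> Slot F i" "A \<in> p i" using A Dslot unfolding G_def by blast
      show ?thesis
      proof (cases "B \<in> set S")
        case True
        obtain m where "m < length S" "B = S ! m" using True by (auto simp: in_set_conv_nth)
        then show ?thesis using slot_cmpS[OF i(1,2)] by blast
      next
        case False
        then obtain j where j: "j \<le> length S" "B \<in> Slot F j" "B \<in> p j" using B Dslot unfolding G_def by blast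
        show ?thesis
        proof (cases "i = j")
          case True then show ?thesis using pj[OF i(1)] i j unfolding is_chain_def by blast
        next
          case False
          then have "i < j \<or> j < i" by auto
          then show ?thesis using slot_order i j by blast
        qed
      qed
    qed
  qed
  ultimately have "G \<in> sd F" unfolding sd_def by simp
  moreover have "set S \<subseteq> G" unfolding G_def by simp
  moreover have "D = G - set S"
    unfolding G_def using Dslot slot_notS by blast
  ultimately show "D \<in> link (sd F) (set S)" unfolding link_def by blast
qed

lemma Chs_lt: "j < length S \<Longrightarrow> Chs F j = OC (Pv j) (S ! j)"
  unfolding Chs_def OC_def Slot_def by simp

lemma Chs_top: "Chs F (length S) = IC (Pv (length S)) F"
  unfolding Chs_def IC_def Slot_def by simp

lemma hpoly_link:
  assumes fin: "finite F" and PF: "Pv (length S) \<subseteq> F"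
  shows "hpoly (link (sd F) (set S)) =
    (\<Prod>i<length S. Ppol (card (S ! i - Pv i))) * Ppol (card (F - Pv (length S)))"
proof -
  let ?k = "length S"
  define R where "R j = (if j < ?k then card (S ! j - Pv j) - 1 else card (F - Pv ?k))" for j
  have SF: "finite (S ! j)" if "j < ?k" for j
  proof -
    have "S ! j \<subseteq> F" using s5[OF that] PF by (rule subset_trans)
    then show ?thesis using fin by (rule finite_subset)
  qed
  have facts: "finite (Chs F j) \<and> (\<forall>D\<in>Chs F j. card D \<le> R j) \<and> (\<exists>D\<in>Chs F j. card D = R j)
      \<and> hp (Chs F j) (R j) = (if j < ?k then Ppol (card (S ! j - Pv j)) else Ppol (card (F - Pv ?k)))"
    if j: "j \<le> ?k" for j
  proof (cases "j < ?k")
    case True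
    note o = OC_facts[OF s2[OF True] SF[OF True]]
    show ?thesis unfolding Chs_lt[OF True] R_def using True o by simp
  next
    case False
    then have jk: "j = ?k" using j by simp
    note o = IC_facts[OF PF fin]
    show ?thesis unfolding jk Chs_top R_def using o by simp
  qed
  have pj: "\<And>p j. p \<in> PiE {..?k} (Chs F) \<Longrightarrow> j \<le> ?k \<Longrightarrow> p j \<subseteq> Slot F j"
    unfolding PiE_iff Chs_def by auto
  have pfin: "\<And>p j. p \<in> PiE {..?k} (Chs F) \<Longrightarrow> j \<le> ?k \<Longrightarrow> finite (p j)"
  proof -
    fix p j assume p: "p \<in> PiE {..?k} (Chs F)" and j: "j \<le> ?k"
    have "p j \<subseteq> Pow F" using pj[OF p j] slot_sub[OF j PF] by auto
    moreover have "finite (Pow F)" using fin by simp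
    ultimately show "finite (p j)" by (rule finite_subset)
  qed
  have recov: "(\<Union>i\<in>{..?k}. p i) \<inter> Slot F j = p j" if p: "p \<in> PiE {..?k} (Chs F)" and j: "j \<le> ?k" for p j
  proof -
    have d: "p i \<inter> Slot F j = {}" if i: "i \<le> ?k" "i \<noteq> j" for i
    proof -
      have "p i \<subseteq> Slot F i" using pj[OF p i(1)] .
      moreover have "Slot F i \<inter> Slot F j = {}" using slot_disj[OF i(1) j i(2)] .
      ultimately show ?thesis by blast
    qed
    show ?thesis
    proof (intro set_eqI iffI)
      fix T assume "T \<in> (\<Union>i\<in>{..?k}. p i) \<inter> Slot F j"
      then obtain i where "i \<le> ?k" "T \<in> p i" "T \<in> Slot F j" by auto
      then show "T \<in> p j" using d by (cases "i = j") auto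
    next
      fix T assume "T \<in> p j" then show "T \<in> (\<Union>i\<in>{..?k}. p i) \<inter> Slot F j" using pj[OF p j] j by auto
    qed
  qed
  have "hpoly (link (sd F) (set S)) = (\<Prod>j\<in>{..?k}. hp (Chs F j) (R j))"
  proof (rule hpoly_product[OF _ _ link_eq[OF PF]])
    show "finite {..?k}" by simp
    show "\<forall>j\<in>{..?k}. finite (Chs F j)" using facts by auto
    show "inj_on (\<lambda>p. \<Union>j\<in>{..?k}. p j) (PiE {..?k} (Chs F))"
    proof (rule inj_onI)
      fix p q assume p: "p \<in> PiE {..?k} (Chs F)" and q: "q \<in> PiE {..?k} (Chs F)"
        and eq: "(\<Union>j\<in>{..?k}. p j) = (\<Union>j\<in>{..?k}. q j)"
      show "p = q"
      proof (rule PiE_ext[OF p q])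
        fix j assume "j \<in> {..?k}"
        then show "p j = q j" using recov[OF p] recov[OF q] eq by (metis atMost_iff)
      qed
    qed
    show "\<forall>p\<in>PiE {..?k} (Chs F). card (\<Union>j\<in>{..?k}. p j) = (\<Sum>j\<in>{..?k}. card (p j))"
    proof
      fix p assume p: "p \<in> PiE {..?k} (Chs F)"
      show "card (\<Union>j\<in>{..?k}. p j) = (\<Sum>j\<in>{..?k}. card (p j))"
      proof (rule card_UN_disjoint)
        show "\<forall>i\<in>{..?k}. finite (p i)" using pfin[OF p] by auto
        show "\<forall>i\<in>{..?k}. \<forall>j\<in>{..?k}. i \<noteq> j \<longrightarrow> p i \<inter> p j = {}"
        proof (intro ballI impI)
          fix i j assume i: "i \<in> {..?k}" and j: "j \<in> {..?k}" and ij: "i \<noteq> j"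
          have "p i \<subseteq> Slot F i" "p j \<subseteq> Slot F j" using pj[OF p] i j by auto
          moreover have "Slot F i \<inter> Slot F j = {}" using slot_disj ij i j by simp
          ultimately show "p i \<inter> p j = {}" by blast
        qed
      qed simp
    qed
    show "\<forall>j\<in>{..?k}. \<forall>D\<in>Chs F j. card D \<le> R j" using facts by auto
    show "\<forall>j\<in>{..?k}. \<exists>D\<in>Chs F j. card D = R j" using facts by auto
  qed
  also have "\<dots> = (\<Prod>j\<in>{..?k}. if j < ?k then Ppol (card (S ! j - Pv j)) else Ppol (card (F - Pv ?k)))"
    using facts by (intro prod.cong refl) auto
  also have "\<dots> = (\<Prod>i<?k. Ppol (card (S ! i - Pv i))) * Ppol (card (F - Pv ?k))"
    unfolding atMost_Suc lessThan_Suc_atMost[symmetric] prod.lessThan_Suc by simp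
  finally show ?thesis .
qed

end




lemma bary_carrier_max:
  assumes "M \<in> G" "\<forall>A\<in>G. A \<subseteq> M"
  shows "bary_carrier G = M"
proof -
  have "G \<noteq> {}" using assms by auto
  moreover have "(THE M. M \<in> G \<and> (\<forall>A\<in>G. A \<subseteq> M)) = M"
    using assms by (intro the_equality) auto
  ultimately show ?thesis unfolding bary_carrier_def by simp
qed

lemma bary_carrier_sub:
  assumes fin: "finite G" and ch: "is_chain G"
  shows "bary_carrier G \<subseteq> F \<longleftrightarrow> (\<forall>T\<in>G. T \<subseteq> F)"
proof (cases "G = {}")
  case True then show ?thesis by (simp add: bary_carrier_def)
next
  case False
  then obtain M where M: "M \<in> G" "\<forall>T\<in>G. T \<subseteq> M" using finite_ne_chain_max fin ch by blast
  then show ?thesis using bary_carrier_max[OF M] by auto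
qed

lemma restr_sd:
  assumes fin: "finite V" and FV: "F \<subseteq> V"
  shows "restr bary_carrier (sd V) F = sd F"
proof (intro set_eqI iffI)
  fix G assume "G \<in> restr bary_carrier (sd V) F"
  then have G: "G \<in> sd V" "bary_carrier G \<subseteq> F" unfolding restr_def by auto
  have "finite G" "is_chain G" using chain_card_le[OF fin G(1)] sd_memD[OF G(1)] by auto
  then have "\<forall>T\<in>G. T \<subseteq> F" using bary_carrier_sub G(2) by blast
  then show "G \<in> sd F" using G(1) unfolding sd_def by auto
next
  fix G assume G: "G \<in> sd F"
  have finF: "finite F" using fin FV finite_subset by blast
  have "finite G" "is_chain G" using chain_card_le[OF finF G] sd_memD[OF G] by auto
  moreover have "\<forall>T\<in>G. T \<subseteq> F" using G unfolding sd_def by auto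
  ultimately have "bary_carrier G \<subseteq> F" using bary_carrier_sub by blast
  moreover have "G \<in> sd V" using G FV unfolding sd_def by auto
  ultimately show "G \<in> restr bary_carrier (sd V) F" unfolding restr_def by simp
qed

lemma bary_S:
  assumes srt: "sorted_wrt (\<subset>) S" and hdne: "S \<noteq> [] \<longrightarrow> hd S \<noteq> {}"
  shows "bary_carrier (set S) = Pv S (length S)" and "Pv S (length S) = (if S = [] then {} else last S)"
proof -
  show P: "Pv S (length S) = (if S = [] then {} else last S)"
    unfolding Pv_def[OF srt hdne] by (simp add: last_conv_nth)
  show "bary_carrier (set S) = Pv S (length S)"
  proof (cases "S = []")
    case True then show ?thesis unfolding Pv_def[OF srt hdne] by (simp add: bary_carrier_def)
  next
    case False
    have "last S \<in> set S" using False by simp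
    moreover have "\<forall>A\<in>set S. A \<subseteq> last S"
    proof
      fix A assume "A \<in> set S"
      then obtain i where "i < length S" "A = S ! i" by (auto simp: in_set_conv_nth)
      then show "A \<subseteq> last S" using s5[OF srt hdne] P False by simp
    qed
    ultimately have "bary_carrier (set S) = last S" by (rule bary_carrier_max)
    then show ?thesis using P False by simp
  qed
qed

lemma alt_sum:
  assumes fin: "finite V" and PV: "P \<subseteq> V"
  shows "(\<Sum>F\<in>{F. P \<subseteq> F \<and> F \<subseteq> V}. (-1) ^ (card V - card F) * Ppol (card (F - P))) = ALT (V - P)"
proof -
  have inj: "inj_on (\<lambda>W. W \<union> P) (Pow (V - P))"
    by (rule inj_onI) auto
  have img: "(\<lambda>W. W \<union> P) ` Pow (V - P) = {F. P \<subseteq> F \<and> F \<subseteq> V}"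
  proof (intro set_eqI iffI)
    fix F assume "F \<in> {F. P \<subseteq> F \<and> F \<subseteq> V}"
    then have "F = (F - P) \<union> P" "F - P \<in> Pow (V - P)" by auto
    then show "F \<in> (\<lambda>W. W \<union> P) ` Pow (V - P)" by blast
  qed (use PV in auto)
  have "(\<Sum>F\<in>{F. P \<subseteq> F \<and> F \<subseteq> V}. (-1) ^ (card V - card F) * Ppol (card (F - P)))
      = (\<Sum>W\<in>Pow (V - P). (-1) ^ (card V - card (W \<union> P)) * Ppol (card ((W \<union> P) - P)))"
    unfolding img[symmetric] using sum.reindex[OF inj] by simp
  also have "\<dots> = ALT (V - P)" unfolding ALT_def
  proof (intro sum.cong refl)
    fix W assume W: "W \<in> Pow (V - P)"
    have finW: "finite W" "finite P" using finite_subset[of W V] finite_subset[of P V] W fin PV by auto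
    have d: "W \<inter> P = {}" "(W \<union> P) - P = W" using W by auto
    have "card (W \<union> P) = card W + card P" using card_Un_disjoint finW d by blast
    moreover have "card (V - P) = card V - card P" using card_Diff_subset finW PV by blast
    ultimately show "(-1) ^ (card V - card (W \<union> P)) * Ppol (card ((W \<union> P) - P))
        = (-1) ^ (card (V - P) - card W) * Ppol (card W)" using d by (simp add: add.commute)
  qed
  finally show ?thesis .
qed

theorem mainTheorem7:
  fixes V :: "'a set" and S :: "'a set list" and n :: nat
  assumes "finite V" and "card V = n"
    and "sorted_wrt (\<subset>) S"
    and "S \<noteq> [] \<longrightarrow> hd S \<noteq> {} \<and> last S \<subseteq> V"
  shows "rel_local_h bary_carrier V (sd V) (set S) =
    derange_poly (card (V - (if S = [] then {} else last S))) *
    (\<Prod>i<length S. eulerian_poly (card (S ! i - (if i = 0 then {} else S ! (i - 1)))))"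
proof -
  note srt = assms(3)
  have hdne: "S \<noteq> [] \<longrightarrow> hd S \<noteq> {}" using assms(4) by simp
  define P where "P = Pv S (length S)"
  have P: "P = (if S = [] then {} else last S)" using bary_S[OF srt hdne] P_def by simp
  have PV: "P \<subseteq> V" using P assms(4) by simp
  have sig: "bary_carrier (set S) = P" using bary_S[OF srt hdne] P_def by simp
  define Pr where "Pr = (\<Prod>i<length S. Ppol (card (S ! i - Pv S i)))"
  have "rel_local_h bary_carrier V (sd V) (set S)
      = (\<Sum>F\<in>{F. P \<subseteq> F \<and> F \<subseteq> V}. (-1) ^ (card V - card F) * (Pr * Ppol (card (F - P))))"
    unfolding rel_local_h_def sig
  proof (intro sum.cong refl)
    fix F assume F: "F \<in> {F. P \<subseteq> F \<and> F \<subseteq> V}"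
    then have FV: "F \<subseteq> V" and PF: "P \<subseteq> F" by auto
    have finF: "finite F" using assms(1) FV finite_subset by blast
    show "(-1) ^ (card V - card F) * hpoly (link (restr bary_carrier (sd V) F) (set S))
        = (-1) ^ (card V - card F) * (Pr * Ppol (card (F - P)))"
      unfolding restr_sd[OF assms(1) FV] hpoly_link[OF srt hdne finF PF[unfolded P_def]] Pr_def P_def ..
  qed
  also have "\<dots> = Pr * (\<Sum>F\<in>{F. P \<subseteq> F \<and> F \<subseteq> V}. (-1) ^ (card V - card F) * Ppol (card (F - P)))"
    by (simp add: sum_distrib_left algebra_simps)
  also have "\<dots> = Pr * derange_poly (card (V - P))"
    unfolding alt_sum[OF assms(1) PV] ALT_card[OF finite_Diff[OF assms(1)]] derange_Qf ..
  also have "Pr = (\<Prod>i<length S. eulerian_poly (card (S ! i - (if i = 0 then {} else S ! (i - 1)))))"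
    unfolding Pr_def eulerian_Ppol Pv_def[OF srt hdne] ..
  finally show ?thesis using P by (simp add: mult.commute)
qed


end
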